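(* Assume $A$ is nonsingular and $\Omega$ is a slice domain. Let $f,g$ be tame slice regular functions on $\Omega$. If, for each $x\in\Omega\setminus\mathbb{R}$, $f'_s(x)$, $g'_s(x)$ and $(f\cdot g)'_s(x)$ belong to $C_A$, then \[\bigcup_{x\in V(f\cdot g)}\mathbb{S}_x=\bigcup_{x\in V(f)\cup V(g)}\mathbb{S}_x.\]
   Context: Let $A$ be a finite-dimensional real algebra with unit $1$ ($\mathbb{R}$ identified with $\mathbb{R}1$) which is alternative (the associator $(x,y,z)=(xy)z-x(yz)$ is alternating), with a $^*$-involution $x\mapsto x^c$ (real linear, $(x^c)^c=x$, $(xy)^c=y^cx^c$, $r^c=r$ for $r\in\mathbb{R}$). Let $t(x)=x+x^c$, $n(x)=xx^c$; $A$ is nonsingular if $n(x)=0$ implies $x=0$. $C_A=\{0\}\cup\{a:n(a),n(a^c)$ are invertible elements of the center of $A\}$, where the center is $\{r:(r,a,b)=0,\ ra=ar\ \forall a,b\}$. $\mathbb{S}_A=\{J\in A:t(J)=0,n(J)=1\}$ (assumed non-empty), $Q_A=\mathbb{R}\cup\{x:t(x),n(x)\in\mathbb{R},4n(x)>t(x)^2\}$; every $x\in Q_A$ is $\alpha+\beta J$ with $\alpha,\beta\in\mathbb{R}$, $J\in\mathbb{S}_A$; $x^c=\alpha-\beta J$, $\mathrm{im}(x)=x-t(x)/2$, $\mathbb{S}_x=\{\alpha+\beta I:I\in\mathbb{S}_A\}$. Let $D\subseteq\mathbb{C}$ be open, connected, meeting $\mathbb{R}$ and invariant under conjugation, and $\Omega=\{\alpha+\beta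 J:\alpha+i\beta\in D,J\in\mathbb{S}_A\}$ (a slice domain). $A_{\mathbb{C}}=\{a+\imath b\}$ with $(a+\imath b)(a'+\imath b')=aa'-bb'+\imath(ab'+ba')$, $\overline{a+\imath b}=a-\imath b$, $(a+\imath b)^c=a^c+\imath b^c$. A stem function $F=F_1+\imath F_2:D\to A_{\mathbb{C}}$ satisfies $F(\bar z)=\overline{F(z)}$ and induces $f=\mathcal{I}(F)$, $f(\alpha+\beta J)=F_1(\alpha+i\beta)+JF_2(\alpha+i\beta)$; $f$ is slice regular if $F$ is $\mathscr{C}^1$ and $\frac12\big(\frac{\partial F}{\partial\alpha}+\imath\frac{\partial F}{\partial\beta}\big)\equiv0$. $f\cdot g=\mathcal{I}(FG)$, $f^c=\mathcal{I}(F^c)$ ($F^c(z)=F(z)^c$), $N(f)=f\cdot f^c$; $f$ is slice preserving if $F_1,F_2$ are real valued, tame if $N(f)$ is slice preserving and $N(f)=N(f^c)$. $V(h)=\{x:h(x)=0\}$. $f'_s(x)=\frac12\mathrm{im}(x)^{-1}(f(x)-f(x^c))$ for $x\in\Omega\setminus\mathbb{R}$. *)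

theory Defs
  imports "HOL-Analysis.Analysis"
begin

text \<open>A finite-dimensional real algebra A is modelled as a euclidean_space type 'a
  (only its real vector space structure and its natural topology are used),
  together with an explicit multiplication mul, unit one and involution cj.
  The algebra need not be associative.\<close>

definition assoc :: "('a::real_vector \<Rightarrow> 'a \<Rightarrow> 'a) \<Rightarrow> 'a \<Rightarrow> 'a \<Rightarrow> 'a \<Rightarrow> 'a" where
  "assoc mul x y z = mul (mul x y) z - mul x (mul y z)"

definition alt_star_alg :: "('a::euclidean_space \<Rightarrow> 'a \<Rightarrow> 'a) \<Rightarrow> 'a \<Rightarrow> ('a \<Rightarrow> 'a) \<Rightarrow> bool" where
  "alt_star_alg mul one cj \<longleftrightarrow>
     bilinear mul \<and> one \<noteq> 0 \<and>
     (\<forall>x. mul one x = x \<and> mul x one = x) \<and>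
     (\<forall>x y. assoc mul x x y = 0 \<and> assoc mul x y x = 0 \<and> assoc mul y x x = 0) \<and>
     linear cj \<and> (\<forall>x. cj (cj x) = x) \<and>
     (\<forall>x y. cj (mul x y) = mul (cj y) (cj x)) \<and>
     (\<forall>r. cj (r *\<^sub>R one) = r *\<^sub>R one)"

definition reals_in :: "'a::real_vector \<Rightarrow> 'a set" where
  "reals_in one = range (\<lambda>r. r *\<^sub>R one)"

definition tr :: "('a::real_vector \<Rightarrow> 'a) \<Rightarrow> 'a \<Rightarrow> 'a" where
  "tr cj x = x + cj x"

definition nrm :: "('a::real_vector \<Rightarrow> 'a \<Rightarrow> 'a) \<Rightarrow> ('a \<Rightarrow> 'a) \<Rightarrow> 'a \<Rightarrow> 'a" where
  "nrm mul cj x = mul x (cj x)"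

definition imp :: "('a::real_vector \<Rightarrow> 'a) \<Rightarrow> 'a \<Rightarrow> 'a" where
  "imp cj x = x - (1/2) *\<^sub>R tr cj x"

definition nonsingular :: "('a::real_vector \<Rightarrow> 'a \<Rightarrow> 'a) \<Rightarrow> ('a \<Rightarrow> 'a) \<Rightarrow> bool" where
  "nonsingular mul cj \<longleftrightarrow> (\<forall>x. nrm mul cj x = 0 \<longrightarrow> x = 0)"

definition center :: "('a::real_vector \<Rightarrow> 'a \<Rightarrow> 'a) \<Rightarrow> 'a set" where
  "center mul = {r. \<forall>a b. assoc mul r a b = 0 \<and> mul r a = mul a r}"

definition invertible_el :: "('a::real_vector \<Rightarrow> 'a \<Rightarrow> 'a) \<Rightarrow> 'a \<Rightarrow> 'a \<Rightarrow> bool" where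
  "invertible_el mul one r \<longleftrightarrow> (\<exists>s. mul r s = one \<and> mul s r = one)"

definition ainv :: "('a::real_vector \<Rightarrow> 'a \<Rightarrow> 'a) \<Rightarrow> 'a \<Rightarrow> 'a \<Rightarrow> 'a" where
  "ainv mul one x = (THE y. mul x y = one \<and> mul y x = one)"

definition CA :: "('a::real_vector \<Rightarrow> 'a \<Rightarrow> 'a) \<Rightarrow> 'a \<Rightarrow> ('a \<Rightarrow> 'a) \<Rightarrow> 'a set" where
  "CA mul one cj = {0} \<union>
     {a. nrm mul cj a \<in> center mul \<and> invertible_el mul one (nrm mul cj a) \<and>
         nrm mul cj (cj a) \<in> center mul \<and> invertible_el mul one (nrm mul cj (cj a))}"

definition SA :: "('a::real_vector \<Rightarrow> 'a \<Rightarrow> 'a) \<Rightarrow> 'a \<Rightarrow> ('a \<Rightarrow> 'a) \<Rightarrow> 'a set" where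
  "SA mul one cj = {J. tr cj J = 0 \<and> nrm mul cj J = one}"

definition sphere_of :: "('a::real_vector \<Rightarrow> 'a \<Rightarrow> 'a) \<Rightarrow> 'a \<Rightarrow> ('a \<Rightarrow> 'a) \<Rightarrow> 'a \<Rightarrow> 'a set" where
  "sphere_of mul one cj x =
     {y. \<exists>\<alpha> \<beta> I J. I \<in> SA mul one cj \<and> J \<in> SA mul one cj \<and>
          x = \<alpha> *\<^sub>R one + \<beta> *\<^sub>R J \<and> y = \<alpha> *\<^sub>R one + \<beta> *\<^sub>R I}"

definition OmegaD :: "('a::real_vector \<Rightarrow> 'a \<Rightarrow> 'a) \<Rightarrow> 'a \<Rightarrow> ('a \<Rightarrow> 'a) \<Rightarrow> complex set \<Rightarrow> 'a set" where
  "OmegaD mul one cj D = {Re z *\<^sub>R one + Im z *\<^sub>R J | z J. z \<in> D \<and> J \<in> SA mul one cj}"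

text \<open>Stem functions D \<rightarrow> A_C, with A_C = A \<times> A, (a,b) standing for a + i b.\<close>
definition stem :: "complex set \<Rightarrow> (complex \<Rightarrow> 'a::real_vector \<times> 'a) \<Rightarrow> bool" where
  "stem D F \<longleftrightarrow> (\<forall>z\<in>D. F (cnj z) = (fst (F z), - snd (F z)))"

text \<open>The slice function f = I(F): f(alpha + beta J) = F1(alpha + i beta) + J F2(alpha + i beta).\<close>
definition induced :: "('a::real_vector \<Rightarrow> 'a \<Rightarrow> 'a) \<Rightarrow> 'a \<Rightarrow> ('a \<Rightarrow> 'a) \<Rightarrow> complex set
    \<Rightarrow> (complex \<Rightarrow> 'a \<times> 'a) \<Rightarrow> 'a \<Rightarrow> 'a" where
  "induced mul one cj D F x =
     (let (z, J) = (SOME (z, J). z \<in> D \<and> J \<in> SA mul one cj \<and> x = Re z *\<^sub>R one + Im z *\<^sub>R J)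
      in fst (F z) + mul J (snd (F z)))"

text \<open>Slice regularity of I(F): F is a C^1 stem function with (dF/d alpha + i dF/d beta) = 0.\<close>
definition slice_regular_stem :: "complex set \<Rightarrow> (complex \<Rightarrow> 'a::euclidean_space \<times> 'a) \<Rightarrow> bool" where
  "slice_regular_stem D F \<longleftrightarrow> stem D F \<and>
     (\<exists>F' :: complex \<Rightarrow> (complex \<Rightarrow>\<^sub>L ('a \<times> 'a)).
        (\<forall>z\<in>D. (F has_derivative blinfun_apply (F' z)) (at z)) \<and>
        continuous_on D F' \<and>
        (\<forall>z\<in>D. fst (blinfun_apply (F' z) 1) - snd (blinfun_apply (F' z) \<i>) = 0 \<and>
                snd (blinfun_apply (F' z) 1) + fst (blinfun_apply (F' z) \<i>) = 0))"

definition stem_mult :: "('a::real_vector \<Rightarrow> 'a \<Rightarrow> 'a) \<Rightarrow> (complex \<Rightarrow> 'a \<times> 'a) \<Rightarrow> (complex \<Rightarrow> 'a \<times> 'a)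
    \<Rightarrow> complex \<Rightarrow> 'a \<times> 'a" where
  "stem_mult mul F G z =
     (mul (fst (F z)) (fst (G z)) - mul (snd (F z)) (snd (G z)),
      mul (fst (F z)) (snd (G z)) + mul (snd (F z)) (fst (G z)))"

definition stem_cj :: "('a \<Rightarrow> 'a) \<Rightarrow> (complex \<Rightarrow> 'a \<times> 'a) \<Rightarrow> complex \<Rightarrow> 'a \<times> 'a" where
  "stem_cj cj F z = (cj (fst (F z)), cj (snd (F z)))"

definition stem_N :: "('a::real_vector \<Rightarrow> 'a \<Rightarrow> 'a) \<Rightarrow> ('a \<Rightarrow> 'a) \<Rightarrow> (complex \<Rightarrow> 'a \<times> 'a) \<Rightarrow> complex \<Rightarrow> 'a \<times> 'a" where
  "stem_N mul cj F = stem_mult mul F (stem_cj cj F)"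

definition slice_preserving_stem :: "'a::real_vector \<Rightarrow> complex set \<Rightarrow> (complex \<Rightarrow> 'a \<times> 'a) \<Rightarrow> bool" where
  "slice_preserving_stem one D F \<longleftrightarrow> (\<forall>z\<in>D. fst (F z) \<in> reals_in one \<and> snd (F z) \<in> reals_in one)"

definition tame_stem :: "('a::real_vector \<Rightarrow> 'a \<Rightarrow> 'a) \<Rightarrow> 'a \<Rightarrow> ('a \<Rightarrow> 'a) \<Rightarrow> complex set
    \<Rightarrow> (complex \<Rightarrow> 'a \<times> 'a) \<Rightarrow> bool" where
  "tame_stem mul one cj D F \<longleftrightarrow>
     slice_preserving_stem one D (stem_N mul cj F) \<and>
     (\<forall>x \<in> OmegaD mul one cj D.
        induced mul one cj D (stem_N mul cj F) x = induced mul one cj D (stem_N mul cj (stem_cj cj F)) x)"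

definition zeros_on :: "'a set \<Rightarrow> ('a \<Rightarrow> 'a::zero) \<Rightarrow> 'a set" where
  "zeros_on \<Omega> h = {x \<in> \<Omega>. h x = 0}"

definition sph_deriv :: "('a::real_vector \<Rightarrow> 'a \<Rightarrow> 'a) \<Rightarrow> 'a \<Rightarrow> ('a \<Rightarrow> 'a) \<Rightarrow> ('a \<Rightarrow> 'a) \<Rightarrow> 'a \<Rightarrow> 'a" where
  "sph_deriv mul one cj f x = (1/2) *\<^sub>R mul (ainv mul one (imp cj x)) (f x - f (cj x))"

end

theory Submission
  imports Defs "HOL-Analysis.Analysis"
begin


locale altalg =
  fixes mul :: "'b::real_vector \<Rightarrow> 'b \<Rightarrow> 'b" (infixl "\<star>" 70)
    and one :: 'b
  assumes madd_l: "(x + y) \<star> z = x \<star> z + y \<star> z"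
    and madd_r: "x \<star> (y + z) = x \<star> y + x \<star> z"
    and mscale_l: "(c *\<^sub>R x) \<star> y = c *\<^sub>R (x \<star> y)"
    and mscale_r: "x \<star> (c *\<^sub>R y) = c *\<^sub>R (x \<star> y)"
    and one_l: "one \<star> x = x" and one_r: "x \<star> one = x"
    and alt_l: "assoc mul x x y = 0" and alt_r: "assoc mul y x x = 0"
begin

lemma mzero_l[simp]: "0 \<star> x = 0" using mscale_l[of 0 x x] by simp
lemma mzero_r[simp]: "x \<star> 0 = 0" using mscale_r[of x 0 x] by simp
lemma mminus_l: "(- x) \<star> y = - (x \<star> y)" using mscale_l[of "-1" x y] by simp
lemma mminus_r: "x \<star> (- y) = - (x \<star> y)" using mscale_r[of x "-1" y] by simp
lemma mdiff_l: "(x - y) \<star> z = x \<star> z - y \<star> z" using madd_l[of x "- y" z] mminus_l[of y z] by simp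
lemma mdiff_r: "x \<star> (y - z) = x \<star> y - x \<star> z" using madd_r[of x y "- z"] mminus_r[of x z] by simp

lemmas msimps = madd_l madd_r mscale_l mscale_r mminus_l mminus_r mdiff_l mdiff_r one_l one_r

lemma assoc_add1: "assoc mul (x + y) z w = assoc mul x z w + assoc mul y z w"
  by (simp add: assoc_def msimps)
lemma assoc_add2: "assoc mul z (x + y) w = assoc mul z x w + assoc mul z y w"
  by (simp add: assoc_def msimps)
lemma assoc_add3: "assoc mul z w (x + y) = assoc mul z w x + assoc mul z w y"
  by (simp add: assoc_def msimps)

lemma swap12: "assoc mul x y z = - assoc mul y x z"
proof -
  have "assoc mul x y z + assoc mul y x z = 0"
    using alt_l[of "x + y" z] unfolding assoc_add1 assoc_add2 by (simp add: alt_l add.commute)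
  then show ?thesis by (simp add: eq_neg_iff_add_eq_0)
qed
lemma swap23: "assoc mul x y z = - assoc mul x z y"
proof -
  have "assoc mul x y z + assoc mul x z y = 0"
    using alt_r[of x "y + z"] unfolding assoc_add3 assoc_add2 by (simp add: alt_r add.commute)
  then show ?thesis by (simp add: eq_neg_iff_add_eq_0)
qed
lemma flex: "assoc mul x y x = 0"
  using swap23[of x y x] alt_l[of x y] by simp
lemma cyc: "assoc mul x y z = assoc mul y z x"
  using swap12[of x y z] swap23[of y x z] by simp

lemma teich: "assoc mul (w \<star> x) y z - assoc mul w (x \<star> y) z + assoc mul w x (y \<star> z)
   = w \<star> assoc mul x y z + assoc mul w x y \<star> z"
  by (simp add: assoc_def msimps)

lemma double_eq: "(x::'b) + x = y + y \<Longrightarrow> x = y"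
  by (metis scaleR_2 scaleR_cancel_left zero_neq_numeral)

lemma lin3: fixes x1 x2 x3 x4 a :: "'b"
  shows "x3 + x1 = x2 \<Longrightarrow> x3 + x4 = x1 + a \<Longrightarrow> x4 + a = x2 \<Longrightarrow> x3 + x3 = a + a"
proof -
  assume h1: "x3 + x1 = x2" and h2: "x3 + x4 = x1 + a" and h3: "x4 + a = x2"
  have "x3 + x3 + (x1 + x4) = (x3 + x1) + (x3 + x4)" by (simp add: algebra_simps)
  also have "\<dots> = (x4 + a) + (x1 + a)" using h1 h2 h3 by simp
  also have "\<dots> = a + a + (x1 + x4)" by (simp add: algebra_simps)
  finally show ?thesis by simp
qed

lemma K1: "assoc mul a b (b \<star> c) = assoc mul a b c \<star> b"
proof -
  have t1: "assoc mul (a \<star> b) b c - assoc mul a (b \<star> b) c + assoc mul a b (b \<star> c) = 0"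
    using teich[of a b b c] by (simp only: alt_l alt_r mzero_r mzero_l add_0)
  have e1: "assoc mul a b (b \<star> c) + assoc mul (a \<star> b) b c = assoc mul a (b \<star> b) c"
    using t1 by (subst (asm) eq_iff_diff_eq_0, subst eq_iff_diff_eq_0, simp add: algebra_simps)
  have t4: "- assoc mul (a \<star> b) b c - (- assoc mul a b (b \<star> c)) + assoc mul a b (c \<star> b) = a \<star> 0 + assoc mul a b c \<star> b"
    using teich[of a b c b] by (simp only: swap23[of "a \<star> b" c b] swap23[of a "b \<star> c" b] flex)
  have e4: "assoc mul a b (b \<star> c) + assoc mul a b (c \<star> b) = assoc mul (a \<star> b) b c + assoc mul a b c \<star> b"
    using t4 by (subst (asm) eq_iff_diff_eq_0, subst eq_iff_diff_eq_0, simp add: algebra_simps)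
  have t5: "0 - (- assoc mul a b (c \<star> b)) + (- assoc mul a (b \<star> b) c) = a \<star> 0 + (- assoc mul a b c) \<star> b"
    using teich[of a c b b] by (simp only: swap23[of a "c \<star> b" b] swap23[of a c "b \<star> b"] swap23[of a c b] alt_r)
  have e5: "assoc mul a b (c \<star> b) + assoc mul a b c \<star> b = assoc mul a (b \<star> b) c"
    using t5 by (subst (asm) eq_iff_diff_eq_0, subst eq_iff_diff_eq_0, simp add: algebra_simps mminus_l)
  have "assoc mul a b (b \<star> c) + assoc mul a b (b \<star> c) = assoc mul a b c \<star> b + assoc mul a b c \<star> b"
    by (rule lin3[OF e1 e4 e5])
  then show ?thesis by (rule double_eq)
qed

lemma moufang_l: "((x \<star> y) \<star> x) \<star> z = x \<star> (y \<star> (x \<star> z))"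
proof -
  have "((x \<star> y) \<star> x) \<star> z - x \<star> (y \<star> (x \<star> z)) = assoc mul (x \<star> y) x z + assoc mul x y (x \<star> z)"
    by (simp add: assoc_def msimps)
  also have "assoc mul x y (x \<star> z) = assoc mul x y z \<star> x"
    using K1[of y x z] swap12[of y x z] swap12[of y x "x \<star> z"] by (simp add: mminus_l)
  also have "assoc mul (x \<star> y) x z = - (assoc mul x y z \<star> x)"
    using K1[of z x y] swap12[of "x \<star> y" x z] cyc[of x "x \<star> y" z] cyc[of "x \<star> y" z x] cyc[of z x y] cyc[of x y z]
    by simp
  finally show ?thesis by simp
qed

end

lemma op_altalg: "altalg mul one \<Longrightarrow> altalg (\<lambda>x y. mul y x) one"
  unfolding altalg_def assoc_def
  by (simp add: eq_neg_iff_add_eq_0)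


context altalg begin

lemma op_assoc: "assoc (\<lambda>x y. y \<star> x) x y z = - assoc mul z y x"
  by (simp add: assoc_def)

lemma K2: "assoc mul (c \<star> b) b a = b \<star> assoc mul c b a"
proof -
  interpret op: altalg "\<lambda>x y. y \<star> x" one by (rule op_altalg[OF altalg_axioms])
  from op.K1[of a b c] show ?thesis by (simp add: op_assoc mminus_r)
qed

lemma moufang_m: "(a \<star> b) \<star> (c \<star> a) = (a \<star> (b \<star> c)) \<star> a"
proof -
  have "(a \<star> b) \<star> (c \<star> a) - (a \<star> (b \<star> c)) \<star> a
      = assoc mul a b (c \<star> a) - a \<star> assoc mul b c a - assoc mul a (b \<star> c) a"
    by (simp add: assoc_def msimps)
  also have "assoc mul a b (c \<star> a) = a \<star> assoc mul a b c"
    using K2[of c a b] cyc[of a b "c \<star> a"] cyc[of b "c \<star> a" a] cyc[of c a b] by simp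
  also have "assoc mul b c a = assoc mul a b c" using cyc[of a b c] by simp
  finally have "(a \<star> b) \<star> (c \<star> a) - (a \<star> (b \<star> c)) \<star> a = 0" by (simp add: flex)
  then show ?thesis by simp
qed

lemma IP:
  assumes xy: "x \<star> y = one" and yx: "y \<star> x = one"
  shows "y \<star> (x \<star> w) = w" "x \<star> (y \<star> w) = w"
proof -
  have sum: "x \<star> (y \<star> v) + y \<star> (x \<star> v) = v + v" for v
  proof -
    have "assoc mul x y v + assoc mul y x v = 0" using swap12[of x y v] by simp
    then have "(x \<star> y) \<star> v - x \<star> (y \<star> v) + ((y \<star> x) \<star> v - y \<star> (x \<star> v)) = 0"
      by (simp only: assoc_def)
    then have "v - x \<star> (y \<star> v) + (v - y \<star> (x \<star> v)) = 0" using xy yx by (simp only: one_l)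
    then show ?thesis by (subst eq_iff_diff_eq_0, subst (asm) eq_iff_diff_eq_0, simp add: algebra_simps)
  qed
  have EE: "x \<star> (y \<star> (x \<star> (y \<star> v))) = x \<star> (y \<star> v)" for v
    using moufang_l[of x y "y \<star> v"] xy by (simp add: one_l)
  have FF: "y \<star> (x \<star> (y \<star> (x \<star> v))) = y \<star> (x \<star> v)" for v
    using moufang_l[of y x "x \<star> v"] yx by (simp add: one_l)
  define e where "e = x \<star> (y \<star> w)"
  define f where "f = y \<star> (x \<star> w)"
  have f_eq: "f = w + w - e" using sum[of w] unfolding e_def f_def by (simp add: algebra_simps)
  have Ef: "x \<star> (y \<star> f) = e"
  proof -
    have "x \<star> (y \<star> f) = e + e - x \<star> (y \<star> e)"
      unfolding f_eq e_def by (simp add: msimps)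
    also have "x \<star> (y \<star> e) = e" unfolding e_def by (rule EE)
    finally show ?thesis by simp
  qed
  have "y \<star> (x \<star> f) = f + f - e" using sum[of f] Ef by (simp add: algebra_simps)
  moreover have "y \<star> (x \<star> f) = f" unfolding f_def by (rule FF)
  ultimately have "f = e" by (simp add: algebra_simps)
  with sum[of w] have ee: "e + e = w + w" unfolding e_def f_def by simp
  then have "e = w" by (rule double_eq)
  then show "x \<star> (y \<star> w) = w" "y \<star> (x \<star> w) = w" using \<open>f = e\<close> unfolding e_def f_def by simp_all
qed

lemma IPr:
  assumes xy: "x \<star> y = one" and yx: "y \<star> x = one"
  shows "(w \<star> x) \<star> y = w" "(w \<star> y) \<star> x = w"
proof -
  interpret op: altalg "\<lambda>x y. y \<star> x" one by (rule op_altalg[OF altalg_axioms])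
  show "(w \<star> x) \<star> y = w" using op.IP(1)[of x y w] op.IP(2)[of x y w] op.IP(1)[of y x w] xy yx by simp
  show "(w \<star> y) \<star> x = w" using op.IP(1)[of x y w] op.IP(2)[of x y w] op.IP(1)[of y x w] xy yx by simp
qed

lemma LP:
  assumes "x \<star> x' = one" "x' \<star> x = one" "y \<star> y' = one" "y' \<star> y = one"
  shows "(x \<star> y) \<star> (y' \<star> x') = one"
proof -
  define c where "c = (y' \<star> x') \<star> x'"
  have "(x \<star> y) \<star> (c \<star> x) = (x \<star> (y \<star> c)) \<star> x" by (rule moufang_m)
  moreover have "c \<star> x = y' \<star> x'" unfolding c_def using IPr(2)[of x x'] assms by simp
  moreover have "y \<star> c = x' \<star> x'"
  proof -
    have "c = y' \<star> (x' \<star> x')" using alt_r[of y' x'] unfolding c_def assoc_def by simp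
    then show ?thesis using IP(2)[of y y'] assms by simp
  qed
  moreover have "x \<star> (x' \<star> x') = x'" using IP(2)[of x x'] assms by simp
  ultimately show ?thesis using assms by simp
qed

lemma cen:
  assumes "r \<in> center mul"
  shows "assoc mul r a b = 0" "r \<star> a = a \<star> r" "assoc mul a r b = 0" "assoc mul a b r = 0"
proof -
  show "assoc mul r a b = 0" "r \<star> a = a \<star> r" using assms by (auto simp: center_def)
  show "assoc mul a r b = 0" using swap12[of a r b] assms by (simp add: center_def)
  show "assoc mul a b r = 0" using cyc[of r a b] assms by (simp add: center_def)
qed

lemma cen_mul:
  assumes "r \<in> center mul"
  shows "(r \<star> x) \<star> y = r \<star> (x \<star> y)" "x \<star> (r \<star> y) = r \<star> (x \<star> y)"
    "(x \<star> r) \<star> y = r \<star> (x \<star> y)" "x \<star> (y \<star> r) = r \<star> (x \<star> y)"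
proof -
  show 1: "(r \<star> x) \<star> y = r \<star> (x \<star> y)" using cen(1)[OF assms, of x y] by (simp add: assoc_def)
  have a: "(x \<star> r) \<star> y = x \<star> (r \<star> y)" using cen(3)[OF assms, of x y] by (simp add: assoc_def)
  show 3: "(x \<star> r) \<star> y = r \<star> (x \<star> y)" using cen(2)[OF assms, of x] 1 by metis
  show 2: "x \<star> (r \<star> y) = r \<star> (x \<star> y)" using a 3 by metis
  show "x \<star> (y \<star> r) = r \<star> (x \<star> y)" using cen(2)[OF assms, of y] 2 by metis
qed

lemma cen_prod: assumes "r \<in> center mul" "s \<in> center mul" shows "r \<star> s \<in> center mul"
proof -
  have "assoc mul (r \<star> s) a b = 0" for a b
    by (simp only: assoc_def cen_mul(1)[OF assms(1)] cen_mul(1)[OF assms(2)] diff_self)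
  moreover have "(r \<star> s) \<star> a = a \<star> (r \<star> s)" for a
    by (simp only: cen_mul(1)[OF assms(1)] cen_mul(2)[OF assms(1)] cen(2)[OF assms(2), of a])
  ultimately show ?thesis by (simp add: center_def)
qed

lemma cen_add: assumes "r \<in> center mul" "s \<in> center mul" shows "r + s \<in> center mul"
  using assms by (simp add: center_def assoc_add1 msimps)

lemma assoc_scale1: "assoc mul (c *\<^sub>R r) a b = c *\<^sub>R assoc mul r a b"
  by (simp add: assoc_def mscale_l mscale_r scaleR_diff_right)

lemma cen_scale: assumes "r \<in> center mul" shows "c *\<^sub>R r \<in> center mul"
  using assms by (simp add: center_def assoc_scale1 mscale_l mscale_r)

lemma cen_one: "c *\<^sub>R one \<in> center mul"
proof -
  have "one \<in> center mul" by (simp add: center_def assoc_def one_l one_r)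
  then show ?thesis by (rule cen_scale)
qed

lemma cen_cancel: assumes "r \<in> center mul" "\<rho> \<star> r = one" "r \<star> w = 0" shows "w = 0"
proof -
  have "\<rho> \<star> (r \<star> w) = (\<rho> \<star> r) \<star> w" using cen(3)[OF assms(1), of \<rho> w] by (simp add: assoc_def)
  then show ?thesis using assms by (simp add: one_l)
qed

lemma cen_inv: assumes "r \<in> center mul" "r \<star> \<rho> = one" "\<rho> \<star> r = one" shows "\<rho> \<in> center mul"
proof -
  have A: "r \<star> (\<rho> \<star> a) = a" for a using cen_mul(1)[OF assms(1), of \<rho> a] assms(2) one_l by metis
  have comm: "\<rho> \<star> a = a \<star> \<rho>" for a
  proof -
    have "r \<star> (a \<star> \<rho>) = a" using cen_mul(4)[OF assms(1), of a \<rho>] assms(3) one_r by metis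
    then have "r \<star> (\<rho> \<star> a - a \<star> \<rho>) = 0" using A[of a] by (simp add: mdiff_r)
    then have "\<rho> \<star> a - a \<star> \<rho> = 0" by (rule cen_cancel[OF assms(1) assms(3)])
    then show ?thesis by simp
  qed
  have "assoc mul \<rho> a b = 0" for a b
  proof -
    have "r \<star> ((\<rho> \<star> a) \<star> b) = a \<star> b"
      using cen_mul(1)[OF assms(1), of "\<rho> \<star> a" b] A[of a] by metis
    moreover have "r \<star> (\<rho> \<star> (a \<star> b)) = a \<star> b" by (rule A)
    ultimately have "r \<star> assoc mul \<rho> a b = 0" by (simp add: assoc_def mdiff_r)
    then show ?thesis by (rule cen_cancel[OF assms(1) assms(3)])
  qed
  with comm show ?thesis by (simp add: center_def)
qed

end

locale altstar = altalg mul one for mul :: "'b::real_vector \<Rightarrow> 'b \<Rightarrow> 'b" (infixl "\<star>" 70) and one +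
  fixes cj :: "'b \<Rightarrow> 'b"
  assumes cj_add: "cj (x + y) = cj x + cj y"
    and cj_scale: "cj (c *\<^sub>R x) = c *\<^sub>R cj x"
    and cj_cj: "cj (cj x) = x"
    and cj_mul: "cj (x \<star> y) = cj y \<star> cj x"
    and cj_one: "cj one = one"
begin

lemma cj_zero[simp]: "cj 0 = 0" using cj_scale[of 0 0] by simp
lemma cj_minus: "cj (- x) = - cj x" using cj_scale[of "-1" x] by simp
lemma cj_diff: "cj (x - y) = cj x - cj y" using cj_add[of x "- y"] cj_minus[of y] by simp

lemma catype_prod:
  assumes X1: "X \<star> cj X = s" and X2: "cj X \<star> X = s" and sc: "s \<in> center mul"
    and si: "s \<star> \<sigma> = one" "\<sigma> \<star> s = one"
    and Y1: "Y \<star> cj Y = t" and Y2: "cj Y \<star> Y = t" and tc: "t \<in> center mul"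
    and ti: "t \<star> \<tau> = one" "\<tau> \<star> t = one"
  shows "(X \<star> Y) \<star> cj (X \<star> Y) = t \<star> s" "cj (X \<star> Y) \<star> (X \<star> Y) = t \<star> s"
proof -
  have \<sigma>c: "\<sigma> \<in> center mul" using cen_inv[OF sc si] .
  have \<tau>c: "\<tau> \<in> center mul" using cen_inv[OF tc ti] .
  define X' where "X' = \<sigma> \<star> cj X"
  define Y' where "Y' = \<tau> \<star> cj Y"
  have xx: "X \<star> X' = one" "X' \<star> X = one"
    unfolding X'_def by (simp_all only: cen_mul(1,2)[OF \<sigma>c] X1 X2 si(2))
  have yy: "Y \<star> Y' = one" "Y' \<star> Y = one"
    unfolding Y'_def by (simp_all only: cen_mul(1,2)[OF \<tau>c] Y1 Y2 ti(2))
  have cX: "cj X = s \<star> X'" unfolding X'_def using cen_mul(1)[OF sc, of \<sigma> "cj X"] si(1) one_l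
    by metis
  have cY: "cj Y = t \<star> Y'" unfolding Y'_def using cen_mul(1)[OF tc, of \<tau> "cj Y"] ti(1) one_l
    by metis
  have cXY: "cj (X \<star> Y) = t \<star> (s \<star> (Y' \<star> X'))"
  proof -
    have "cj (X \<star> Y) = (t \<star> Y') \<star> (s \<star> X')" by (simp only: cj_mul cX cY)
    also have "\<dots> = t \<star> (Y' \<star> (s \<star> X'))" by (rule cen_mul(1)[OF tc])
    also have "Y' \<star> (s \<star> X') = s \<star> (Y' \<star> X')" by (rule cen_mul(2)[OF sc])
    finally show ?thesis .
  qed
  show "(X \<star> Y) \<star> cj (X \<star> Y) = t \<star> s"
  proof -
    have "(X \<star> Y) \<star> cj (X \<star> Y) = t \<star> ((X \<star> Y) \<star> (s \<star> (Y' \<star> X')))"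
      unfolding cXY by (rule cen_mul(2)[OF tc])
    also have "(X \<star> Y) \<star> (s \<star> (Y' \<star> X')) = s \<star> ((X \<star> Y) \<star> (Y' \<star> X'))" by (rule cen_mul(2)[OF sc])
    also have "(X \<star> Y) \<star> (Y' \<star> X') = one" by (rule LP[OF xx yy])
    finally show ?thesis by (simp only: one_r)
  qed
  show "cj (X \<star> Y) \<star> (X \<star> Y) = t \<star> s"
  proof -
    have "cj (X \<star> Y) \<star> (X \<star> Y) = t \<star> ((s \<star> (Y' \<star> X')) \<star> (X \<star> Y))"
      unfolding cXY by (rule cen_mul(1)[OF tc])
    also have "(s \<star> (Y' \<star> X')) \<star> (X \<star> Y) = s \<star> ((Y' \<star> X') \<star> (X \<star> Y))" by (rule cen_mul(1)[OF sc])
    also have "(Y' \<star> X') \<star> (X \<star> Y) = one" by (rule LP[OF yy(2,1) xx(2,1)])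
    finally show ?thesis by (simp only: one_r)
  qed
qed

end



lemma pair_zero[simp]: "(0, 0) = (0 :: 'a::zero \<times> 'b::zero)" by (simp add: zero_prod_def)

definition cmul :: "('a::real_vector \<Rightarrow> 'a \<Rightarrow> 'a) \<Rightarrow> 'a \<times> 'a \<Rightarrow> 'a \<times> 'a \<Rightarrow> 'a \<times> 'a" where
  "cmul mul X Y = (mul (fst X) (fst Y) - mul (snd X) (snd Y), mul (fst X) (snd Y) + mul (snd X) (fst Y))"

definition ccj :: "('a \<Rightarrow> 'a) \<Rightarrow> 'a \<times> 'a \<Rightarrow> 'a \<times> 'a" where
  "ccj cj X = (cj (fst X), cj (snd X))"

context altalg begin

lemma cassoc: "assoc (cmul mul) X Y Z =
  (assoc mul (fst X) (fst Y) (fst Z) - assoc mul (snd X) (snd Y) (fst Z)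
     - assoc mul (fst X) (snd Y) (snd Z) - assoc mul (snd X) (fst Y) (snd Z),
   assoc mul (fst X) (fst Y) (snd Z) - assoc mul (snd X) (snd Y) (snd Z)
     + assoc mul (fst X) (snd Y) (fst Z) + assoc mul (snd X) (fst Y) (fst Z))"
  by (simp add: assoc_def cmul_def msimps algebra_simps)

lemma c_altalg: "altalg (cmul mul) (one, 0)"
proof
  fix x y z :: "'b \<times> 'b" and c :: real
  show "cmul mul (x + y) z = cmul mul x z + cmul mul y z" by (simp add: cmul_def msimps algebra_simps)
  show "cmul mul x (y + z) = cmul mul x y + cmul mul x z" by (simp add: cmul_def msimps algebra_simps)
  show "cmul mul (c *\<^sub>R x) y = c *\<^sub>R cmul mul x y" by (simp add: cmul_def msimps algebra_simps)
  show "cmul mul x (c *\<^sub>R y) = c *\<^sub>R cmul mul x y" by (simp add: cmul_def msimps algebra_simps)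
  show "cmul mul (one, 0) x = x" by (simp add: cmul_def one_l)
  show "cmul mul x (one, 0) = x" by (simp add: cmul_def one_r)
  show "assoc (cmul mul) x x y = 0"
    unfolding cassoc using swap12[of "fst x" "snd x"] by (simp add: alt_l prod_eq_iff)
  show "assoc (cmul mul) y x x = 0"
    unfolding cassoc using swap23[of "fst y" "snd x" "fst x"] swap23[of "snd y" "snd x" "fst x"] by (simp add: alt_r prod_eq_iff)
qed

lemma c_center: assumes "c1 \<in> center mul" "c2 \<in> center mul" shows "(c1, c2) \<in> center (cmul mul)"
  unfolding center_def
  by (simp add: cassoc cen[OF assms(1)] cen[OF assms(2)] cmul_def prod_eq_iff)

end

context altstar begin

lemma c_altstar: "altstar (cmul mul) (one, 0) (ccj cj)"
proof -
  interpret C: altalg "cmul mul" "(one, 0)" by (rule c_altalg)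
  show ?thesis
  proof
    fix x y :: "'b \<times> 'b" and c :: real
    show "ccj cj (x + y) = ccj cj x + ccj cj y" by (simp add: ccj_def cj_add)
    show "ccj cj (c *\<^sub>R x) = c *\<^sub>R ccj cj x" by (simp add: ccj_def cj_scale)
    show "ccj cj (ccj cj x) = x" by (simp add: ccj_def cj_cj)
    show "ccj cj (cmul mul x y) = cmul mul (ccj cj y) (ccj cj x)"
      by (simp add: ccj_def cmul_def cj_diff cj_add cj_mul add.commute)
    show "ccj cj (one, 0) = (one, 0)" by (simp add: ccj_def cj_one)
  qed
qed

lemma CA_eq: assumes "y \<in> CA mul one cj" shows "y \<star> cj y = cj y \<star> y"
proof (cases "y = 0")
  case True then show ?thesis by simp
next
  case False
  define r where "r = y \<star> cj y"
  define s where "s = cj y \<star> y"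
  have rc: "r \<in> center mul" and ri: "invertible_el mul one r" and sc: "s \<in> center mul"
    using assms False by (auto simp: CA_def nrm_def r_def s_def cj_cj)
  obtain \<rho> where \<rho>: "r \<star> \<rho> = one" "\<rho> \<star> r = one" using ri by (auto simp: invertible_el_def)
  have "r \<star> y = s \<star> y"
    using flex[of y "cj y"] cen(2)[OF sc, of y] by (simp add: assoc_def r_def s_def)
  then have "(r \<star> y) \<star> cj y = (s \<star> y) \<star> cj y" by simp
  moreover have "(r \<star> y) \<star> cj y = r \<star> r" by (metis cen_mul(1)[OF rc] r_def)
  moreover have "(s \<star> y) \<star> cj y = s \<star> r" by (metis cen_mul(1)[OF sc] r_def)
  ultimately have "r \<star> r = s \<star> r" by simp
  then have "r \<star> (r - s) = 0" by (simp add: mdiff_r cen(2)[OF sc])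
  then have "r - s = 0" by (rule cen_cancel[OF rc \<rho>(2)])
  then show ?thesis by (simp add: r_def s_def)
qed

end


lemma lim_eq:
  fixes f g :: "real \<Rightarrow> 'c::t2_space"
  assumes "continuous (at 1) f" "continuous (at 1) g" "\<And>l. l \<noteq> 1 \<Longrightarrow> l \<noteq> -1 \<Longrightarrow> f l = g l"
  shows "f 1 = g 1"
proof -
  have tf: "(f \<longlongrightarrow> f 1) (at 1)" using assms(1) by (simp add: continuous_at)
  have tg: "(g \<longlongrightarrow> g 1) (at 1)" using assms(2) by (simp add: continuous_at)
  have ev: "eventually (\<lambda>l. f l = g l) (at (1::real))"
    unfolding eventually_at
    by (rule exI[of _ 1]) (auto simp: dist_real_def intro!: assms(3))
  have "(g \<longlongrightarrow> f 1) (at 1)" using tendsto_cong[OF ev] tf by simp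
  then show ?thesis using tg tendsto_unique[OF trivial_limit_at] by blast
qed

lemma cont_cmul:
  assumes bb: "bounded_bilinear mul" and P: "continuous F P" and Q: "continuous F Q"
  shows "continuous F (\<lambda>l. cmul mul (P l) (Q l))"
  unfolding cmul_def
  by (intro continuous_intros bounded_bilinear.continuous[OF bb] P Q)

lemma cont_ccj:
  assumes bl: "bounded_linear cj" and P: "continuous F P"
  shows "continuous F (\<lambda>l. ccj cj (P l))"
  unfolding ccj_def
  by (intro continuous_intros bounded_linear.continuous[OF bl] P)

lemma cplx_zero:
  fixes a b c d :: real
  shows "(a*c - b*d = 0 \<and> a*d + b*c = 0) \<longleftrightarrow> ((a = 0 \<and> b = 0) \<or> (c = 0 \<and> d = 0))"
proof
  assume h: "a*c - b*d = 0 \<and> a*d + b*c = 0"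
  have "(a*c - b*d)^2 + (a*d + b*c)^2 = (a^2 + b^2) * (c^2 + d^2)"
    by (simp add: power2_eq_square algebra_simps)
  then have "(a^2 + b^2) * (c^2 + d^2) = 0" using h by simp
  then show "(a = 0 \<and> b = 0) \<or> (c = 0 \<and> d = 0)" by (auto simp: sum_squares_eq_zero_iff)
qed auto

context altstar begin

abbreviation NC where "NC X \<equiv> cmul mul X (ccj cj X)"

definition catC where
  "catC X \<longleftrightarrow> (\<exists>s \<sigma>. NC X = s \<and> cmul mul (ccj cj X) X = s \<and> s \<in> center (cmul mul)
      \<and> cmul mul s \<sigma> = (one, 0) \<and> cmul mul \<sigma> s = (one, 0))"

lemma catC_prod:
  assumes "catC X" "catC Y"
  shows "NC (cmul mul X Y) = cmul mul (NC X) (NC Y)"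
proof -
  interpret C: altstar "cmul mul" "(one, 0)" "ccj cj" by (rule c_altstar)
  obtain s \<sigma> where X: "NC X = s" "cmul mul (ccj cj X) X = s" "s \<in> center (cmul mul)"
      "cmul mul s \<sigma> = (one, 0)" "cmul mul \<sigma> s = (one, 0)" using assms(1) unfolding catC_def by blast
  obtain t \<tau> where Y: "NC Y = t" "cmul mul (ccj cj Y) Y = t" "t \<in> center (cmul mul)"
      "cmul mul t \<tau> = (one, 0)" "cmul mul \<tau> t = (one, 0)" using assms(2) unfolding catC_def by blast
  have "NC (cmul mul X Y) = cmul mul t s"
    by (rule C.catype_prod(1)[OF X Y])
  also have "\<dots> = cmul mul s t" using C.cen(2)[OF Y(3)] by simp
  finally show ?thesis using X(1) Y(1) by simp
qed

lemma cmul_reals: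
  "cmul mul (a *\<^sub>R one, b *\<^sub>R one) (c *\<^sub>R one, d *\<^sub>R one) = ((a*c - b*d) *\<^sub>R one, (a*d + b*c) *\<^sub>R one)"
  by (simp add: cmul_def mscale_l mscale_r one_l scaleR_diff_left scaleR_add_left mult.commute)

lemma real_center: "(a *\<^sub>R one, b *\<^sub>R one) \<in> center (cmul mul)"
  by (rule c_center[OF cen_one cen_one])

lemma good_cases:
  assumes ns: "nonsingular mul cj"
    and g1: "fst (NC F) \<in> reals_in one" and g2: "snd (NC F) \<in> reals_in one"
    and g3: "cmul mul (ccj cj F) F = NC F" and g4: "snd F \<in> CA mul one cj"
  shows "catC F \<or> F = 0 \<or> (snd F \<noteq> 0 \<and> (\<forall>l. l * l \<noteq> 1 \<longrightarrow> catC (fst F, l *\<^sub>R snd F)))"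
proof -
  obtain a b where F: "F = (a, b)" by (cases F)
  obtain \<alpha> where A: "fst (NC F) = \<alpha> *\<^sub>R one" using g1 unfolding reals_in_def by auto
  obtain \<beta> where B: "snd (NC F) = \<beta> *\<^sub>R one" using g2 unfolding reals_in_def by auto
  have NF: "NC F = (\<alpha> *\<^sub>R one, \<beta> *\<^sub>R one)" using A B by (simp add: prod_eq_iff)
  show ?thesis
  proof (cases "\<alpha> = 0 \<and> \<beta> = 0")
    case False
    define D where "D = \<alpha> * \<alpha> + \<beta> * \<beta>"
    have D: "D \<noteq> 0" using False unfolding D_def by (auto simp: sum_squares_eq_zero_iff)
    define \<sigma> where "\<sigma> = ((\<alpha> / D) *\<^sub>R one, (- \<beta> / D) *\<^sub>R one)"
    have r1: "\<alpha> * (\<alpha> / D) - \<beta> * (- \<beta> / D) = 1" "\<alpha> * (- \<beta> / D) + \<beta> * (\<alpha> / D) = 0"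
      "\<alpha> / D * \<alpha> - (- \<beta> / D) * \<beta> = 1" "\<alpha> / D * \<beta> + (- \<beta> / D) * \<alpha> = 0"
      using D by (simp_all add: D_def diff_divide_distrib[symmetric] add_divide_distrib[symmetric])
    have 1: "cmul mul (NC F) \<sigma> = (one, 0)" "cmul mul \<sigma> (NC F) = (one, 0)"
      unfolding NF \<sigma>_def cmul_reals by (simp_all only: r1 scaleR_one scaleR_zero_left)
    have "catC F" unfolding catC_def
      by (rule exI[of _ "NC F"], rule exI[of _ \<sigma>]) (simp add: g3 1 real_center[of \<alpha> \<beta>, folded NF])
    then show ?thesis by simp
  next
    case True
    then have N0: "NC F = 0" using NF by simp
    have e1: "a \<star> cj a = b \<star> cj b" "a \<star> cj b + b \<star> cj a = 0"
      using N0 unfolding F cmul_def ccj_def by (simp_all add: prod_eq_iff)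
    have e2: "cj a \<star> a = cj b \<star> b" "cj a \<star> b + cj b \<star> a = 0"
      using g3 N0 unfolding F cmul_def ccj_def by (simp_all add: prod_eq_iff)
    show ?thesis
    proof (cases "b = 0")
      case True
      then have "nrm mul cj a = 0" using e1 by (simp add: nrm_def)
      then have "a = 0" using ns by (simp add: nonsingular_def)
      then show ?thesis using True F by simp
    next
      case False
      define r where "r = b \<star> cj b"
      have rc: "r \<in> center mul" and ri: "invertible_el mul one r"
        using g4 False F by (auto simp: CA_def nrm_def r_def)
      obtain \<rho> where \<rho>: "r \<star> \<rho> = one" "\<rho> \<star> r = one" using ri by (auto simp: invertible_el_def)
      have rs: "cj b \<star> b = r" using CA_eq g4 F by (simp add: r_def)
      have "catC (a, l *\<^sub>R b)" if l: "l * l \<noteq> 1" for l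
      proof -
        have l1: "1 - l * l \<noteq> 0" using l by simp
        define s where "s = ((1 - l * l) *\<^sub>R r, 0::'b)"
        define \<sigma> where "\<sigma> = ((1 / (1 - l * l)) *\<^sub>R \<rho>, 0::'b)"
        have n1: "NC (a, l *\<^sub>R b) = s"
          using e1 unfolding s_def cmul_def ccj_def r_def
          by (simp add: cj_scale mscale_l mscale_r scaleR_diff_left scaleR_add_right[symmetric] flip: scaleR_right_distrib)
        have n2: "cmul mul (ccj cj (a, l *\<^sub>R b)) (a, l *\<^sub>R b) = s"
          using e2 rs unfolding s_def cmul_def ccj_def
          by (simp add: cj_scale mscale_l mscale_r scaleR_diff_left flip: scaleR_right_distrib)
        have sc: "s \<in> center (cmul mul)" unfolding s_def
          using c_center[OF cen_scale[OF rc] cen_one[of 0]] by simp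
        have s\<sigma>: "cmul mul s \<sigma> = (one, 0)" "cmul mul \<sigma> s = (one, 0)"
          unfolding s_def \<sigma>_def cmul_def using l1 \<rho> by (simp_all add: mscale_l mscale_r)
        show ?thesis unfolding catC_def using n1 n2 sc s\<sigma> by blast
      qed
      then show ?thesis using False F by simp
    qed
  qed
qed

end



context altstar begin

lemma L1:
  assumes ns: "nonsingular mul cj" and SAne: "SA mul one cj \<noteq> {}"
    and yCA: "y \<in> CA mul one cj" and n2c: "x \<star> cj y + y \<star> cj x \<in> center mul"
  shows "(\<exists>J\<in>SA mul one cj. x + J \<star> y = 0) \<longleftrightarrow> (x \<star> cj x - y \<star> cj y = 0 \<and> x \<star> cj y + y \<star> cj x = 0)"
proof (cases "y = 0")
  case True
  have e: "x \<star> cj x = 0 \<longleftrightarrow> x = 0"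
  proof
    assume "x \<star> cj x = 0" then show "x = 0" using ns unfolding nonsingular_def nrm_def by blast
  qed simp
  obtain J0 where J0: "J0 \<in> SA mul one cj" using SAne by blast
  have "(\<exists>J\<in>SA mul one cj. x + J \<star> y = 0) \<longleftrightarrow> x = 0"
  proof
    assume "\<exists>J\<in>SA mul one cj. x + J \<star> y = 0" then show "x = 0" using True by simp
  next
    assume "x = 0" then show "\<exists>J\<in>SA mul one cj. x + J \<star> y = 0" using True J0 by auto
  qed
  then show ?thesis using True e by simp
next
  case False
  define r where "r = y \<star> cj y"
  have rc: "r \<in> center mul" and ri: "invertible_el mul one r"
    using yCA False by (auto simp: CA_def nrm_def r_def)
  have rs: "cj y \<star> y = r" using CA_eq[OF yCA] by (simp add: r_def)
  obtain \<rho> where \<rho>: "r \<star> \<rho> = one" "\<rho> \<star> r = one" using ri by (auto simp: invertible_el_def)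
  have \<rho>c: "\<rho> \<in> center mul" by (rule cen_inv[OF rc \<rho>])
  define y' where "y' = \<rho> \<star> cj y"
  have yy1: "y \<star> y' = one"
  proof -
    have "y \<star> y' = \<rho> \<star> (y \<star> cj y)" unfolding y'_def by (rule cen_mul(2)[OF \<rho>c])
    then show ?thesis using \<rho>(2) r_def by simp
  qed
  have yy2: "y' \<star> y = one"
  proof -
    have "y' \<star> y = \<rho> \<star> (cj y \<star> y)" unfolding y'_def by (rule cen_mul(1)[OF \<rho>c])
    then show ?thesis using \<rho>(2) rs by simp
  qed
  note yy = yy1 yy2
  have cy: "cj y = r \<star> y'" unfolding y'_def using cen_mul(1)[OF rc, of \<rho> "cj y"] \<rho>(1) one_l by metis
  define u where "u = x \<star> y'"
  have xu: "x = u \<star> y" unfolding u_def using IPr(2)[OF yy] by simp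
  have Z: "(\<exists>J\<in>SA mul one cj. x + J \<star> y = 0) \<longleftrightarrow> - u \<in> SA mul one cj"
  proof
    assume "\<exists>J\<in>SA mul one cj. x + J \<star> y = 0"
    then obtain J where J: "J \<in> SA mul one cj" "x + J \<star> y = 0" by auto
    have "(u + J) \<star> y = 0" using J(2) xu by (simp add: madd_l)
    then have "((u + J) \<star> y) \<star> y' = 0" by simp
    then have "u + J = 0" using IPr(1)[OF yy, of "u + J"] by simp
    then have "J = - u" by (simp add: eq_neg_iff_add_eq_0 add.commute)
    with J(1) show "- u \<in> SA mul one cj" by simp
  next
    assume "- u \<in> SA mul one cj"
    moreover have "x + (- u) \<star> y = 0" using xu by (simp add: mminus_l)
    ultimately show "\<exists>J\<in>SA mul one cj. x + J \<star> y = 0" by blast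
  qed
  define t where "t = u + cj u"
  have 1: "x \<star> cj y = r \<star> u"
  proof -
    have "x \<star> cj y = (u \<star> y) \<star> (r \<star> y')" using xu cy by simp
    also have "\<dots> = r \<star> ((u \<star> y) \<star> y')" by (rule cen_mul(2)[OF rc])
    also have "(u \<star> y) \<star> y' = u" by (rule IPr(1)[OF yy])
    finally show ?thesis .
  qed
  have 2: "y \<star> cj x = r \<star> cj u"
  proof -
    have "y \<star> cj x = y \<star> ((r \<star> y') \<star> cj u)" using xu cy by (simp add: cj_mul)
    also have "(r \<star> y') \<star> cj u = r \<star> (y' \<star> cj u)" by (rule cen_mul(1)[OF rc])
    also have "y \<star> (r \<star> (y' \<star> cj u)) = r \<star> (y \<star> (y' \<star> cj u))" by (rule cen_mul(2)[OF rc])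
    also have "y \<star> (y' \<star> cj u) = cj u" by (rule IP(2)[OF yy])
    finally show ?thesis .
  qed
  have n2: "x \<star> cj y + y \<star> cj x = r \<star> t" using 1 2 by (simp add: t_def madd_r)
  have tc: "t \<in> center mul"
  proof -
    have "t = \<rho> \<star> (r \<star> t)" using cen_mul(1)[OF \<rho>c, of r t] \<rho>(2) one_l by metis
    then have "t = \<rho> \<star> (x \<star> cj y + y \<star> cj x)" using n2 by simp
    then show ?thesis using cen_prod[OF \<rho>c n2c] by simp
  qed
  have n1: "x \<star> cj x = r \<star> (u \<star> cj u)"
  proof -
    have cu: "cj u = t - u" by (simp add: t_def)
    have "x \<star> cj x = (u \<star> y) \<star> (cj y \<star> cj u)" using xu by (simp add: cj_mul)
    also have "\<dots> = (u \<star> y) \<star> (cj y \<star> t) - (u \<star> y) \<star> (cj y \<star> u)" by (simp add: cu mdiff_r)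
    also have "(u \<star> y) \<star> (cj y \<star> t) = t \<star> (r \<star> u)"
    proof -
      have "(u \<star> y) \<star> (cj y \<star> t) = t \<star> ((u \<star> y) \<star> cj y)" by (rule cen_mul(4)[OF tc])
      also have "(u \<star> y) \<star> cj y = r \<star> u" using 1 xu by simp
      finally show ?thesis .
    qed
    also have "(u \<star> y) \<star> (cj y \<star> u) = r \<star> (u \<star> u)"
    proof -
      have "(u \<star> y) \<star> (cj y \<star> u) = (u \<star> (y \<star> cj y)) \<star> u" by (rule moufang_m)
      also have "\<dots> = (u \<star> r) \<star> u" by (simp add: r_def)
      also have "\<dots> = r \<star> (u \<star> u)" by (rule cen_mul(3)[OF rc])
      finally show ?thesis .
    qed
    also have "t \<star> (r \<star> u) = r \<star> (t \<star> u)" by (rule cen_mul(2)[OF rc])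
    also have "r \<star> (t \<star> u) - r \<star> (u \<star> u) = r \<star> (u \<star> cj u)"
      using cen(2)[OF tc, of u] by (simp add: cu mdiff_r)
    finally show ?thesis .
  qed
  have SAu: "- u \<in> SA mul one cj \<longleftrightarrow> (t = 0 \<and> u \<star> cj u = one)"
  proof -
    have "tr cj (- u) = - t" by (simp add: tr_def t_def cj_minus)
    moreover have "nrm mul cj (- u) = u \<star> cj u" by (simp add: nrm_def cj_minus mminus_l mminus_r)
    ultimately show ?thesis by (simp add: SA_def)
  qed
  have E1: "x \<star> cj x - y \<star> cj y = 0 \<longleftrightarrow> u \<star> cj u = one"
  proof
    assume "x \<star> cj x - y \<star> cj y = 0"
    then have "r \<star> (u \<star> cj u - one) = 0" using n1 by (simp add: mdiff_r one_r r_def)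
    then have "u \<star> cj u - one = 0" by (rule cen_cancel[OF rc \<rho>(2)])
    then show "u \<star> cj u = one" by simp
  next
    assume "u \<star> cj u = one"
    then show "x \<star> cj x - y \<star> cj y = 0" using n1 by (simp add: one_r r_def)
  qed
  have E2: "x \<star> cj y + y \<star> cj x = 0 \<longleftrightarrow> t = 0"
  proof
    assume "x \<star> cj y + y \<star> cj x = 0"
    then have "r \<star> t = 0" using n2 by simp
    then show "t = 0" by (rule cen_cancel[OF rc \<rho>(2)])
  next
    assume "t = 0" then show "x \<star> cj y + y \<star> cj x = 0" using n2 by simp
  qed
  show ?thesis using Z SAu E1 E2 by blast
qed

end



abbreviation cN where "cN mul cj X \<equiv> cmul mul X (ccj cj X)"

definition goodF where
  "goodF mul one cj X \<longleftrightarrow> fst (cN mul cj X) \<in> reals_in one \<and> snd (cN mul cj X) \<in> reals_in one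
     \<and> cmul mul (ccj cj X) X = cN mul cj X \<and> snd X \<in> CA mul one cj"

lemma cont_NC:
  assumes bb: "bounded_bilinear mul" and bl: "bounded_linear cj" and P: "continuous F P"
  shows "continuous F (\<lambda>l. cN mul cj (P l))"
  by (intro cont_cmul[OF bb] cont_ccj[OF bl] P)

lemma real_sq1: "(l::real) \<noteq> 1 \<Longrightarrow> l \<noteq> -1 \<Longrightarrow> l * l \<noteq> 1"
  by (metis minus_equation_iff mult_cancel_right1 square_eq_1_iff power2_eq_square)

lemma NC_fst: "fst (cN mul cj X) = mul (fst X) (cj (fst X)) - mul (snd X) (cj (snd X))"
  by (simp add: cmul_def ccj_def)
lemma NC_snd: "snd (cN mul cj X) = mul (fst X) (cj (snd X)) + mul (snd X) (cj (fst X))"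
  by (simp add: cmul_def ccj_def)

lemma stepA:
  fixes mul :: "'b::real_normed_vector \<Rightarrow> 'b \<Rightarrow> 'b"
  assumes alg: "altstar mul one cj" and bb: "bounded_bilinear mul" and bl: "bounded_linear cj"
    and ns: "nonsingular mul cj"
    and gF: "goodF mul one cj F" and cG: "altstar.catC mul one cj G"
  shows "cN mul cj (cmul mul F G) = cmul mul (cN mul cj F) (cN mul cj G)"
proof -
  interpret A: altstar mul one cj by (rule alg)
  interpret C: altstar "cmul mul" "(one, 0)" "ccj cj" by (rule A.c_altstar)
  have "A.catC F \<or> F = 0 \<or> (snd F \<noteq> 0 \<and> (\<forall>l. l * l \<noteq> 1 \<longrightarrow> A.catC (fst F, l *\<^sub>R snd F)))"
    using gF ns A.good_cases unfolding goodF_def by blast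
  then consider (a) "A.catC F" | (b) "F = 0" | (c) "\<forall>l. l * l \<noteq> 1 \<longrightarrow> A.catC (fst F, l *\<^sub>R snd F)" by blast
  then show ?thesis
  proof cases
    case a then show ?thesis using A.catC_prod cG by blast
  next
    case b then show ?thesis by (simp add: ccj_def)
  next
    case c
    define f where "f l = cN mul cj (cmul mul (fst F, l *\<^sub>R snd F) G)" for l
    define g where "g l = cmul mul (cN mul cj (fst F, l *\<^sub>R snd F)) (cN mul cj G)" for l
    have "f 1 = g 1"
    proof (rule lim_eq)
      show "continuous (at 1) f" unfolding f_def
        by (intro cont_NC[OF bb bl] cont_cmul[OF bb] continuous_intros)
      show "continuous (at 1) g" unfolding g_def
        by (intro cont_cmul[OF bb] cont_NC[OF bb bl] continuous_intros)
      fix l :: real assume "l \<noteq> 1" "l \<noteq> -1"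
      then have "A.catC (fst F, l *\<^sub>R snd F)" using c real_sq1 by blast
      then show "f l = g l" unfolding f_def g_def using A.catC_prod cG by blast
    qed
    then show ?thesis unfolding f_def g_def by simp
  qed
qed

lemma KEY:
  fixes mul :: "'b::real_normed_vector \<Rightarrow> 'b \<Rightarrow> 'b"
  assumes alg: "altstar mul one cj" and bb: "bounded_bilinear mul" and bl: "bounded_linear cj"
    and ns: "nonsingular mul cj"
    and gF: "goodF mul one cj F" and gG: "goodF mul one cj G"
  shows "cN mul cj (cmul mul F G) = cmul mul (cN mul cj F) (cN mul cj G)"
proof -
  interpret A: altstar mul one cj by (rule alg)
  interpret C: altstar "cmul mul" "(one, 0)" "ccj cj" by (rule A.c_altstar)
  have "A.catC G \<or> G = 0 \<or> (snd G \<noteq> 0 \<and> (\<forall>l. l * l \<noteq> 1 \<longrightarrow> A.catC (fst G, l *\<^sub>R snd G)))"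
    using gG ns A.good_cases unfolding goodF_def by blast
  then consider (a) "A.catC G" | (b) "G = 0" | (c) "\<forall>l. l * l \<noteq> 1 \<longrightarrow> A.catC (fst G, l *\<^sub>R snd G)" by blast
  then show ?thesis
  proof cases
    case a then show ?thesis using stepA[OF alg bb bl ns gF] by blast
  next
    case b then show ?thesis by (simp add: ccj_def)
  next
    case c
    define f where "f l = cN mul cj (cmul mul F (fst G, l *\<^sub>R snd G))" for l
    define g where "g l = cmul mul (cN mul cj F) (cN mul cj (fst G, l *\<^sub>R snd G))" for l
    have "f 1 = g 1"
    proof (rule lim_eq)
      show "continuous (at 1) f" unfolding f_def
        by (intro cont_NC[OF bb bl] cont_cmul[OF bb] continuous_intros)
      show "continuous (at 1) g" unfolding g_def
        by (intro cont_cmul[OF bb] cont_NC[OF bb bl] continuous_intros)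
      fix l :: real assume "l \<noteq> 1" "l \<noteq> -1"
      then have "A.catC (fst G, l *\<^sub>R snd G)" using c real_sq1 by blast
      then show "f l = g l" unfolding f_def g_def using stepA[OF alg bb bl ns gF] by blast
    qed
    then show ?thesis unfolding f_def g_def by simp
  qed
qed

lemma main_pt:
  fixes mul :: "'b::real_normed_vector \<Rightarrow> 'b \<Rightarrow> 'b"
  assumes alg: "altstar mul one cj" and bb: "bounded_bilinear mul" and bl: "bounded_linear cj"
    and ns: "nonsingular mul cj"
    and SAne: "SA mul one cj \<noteq> {}" and one0: "one \<noteq> 0"
    and gF: "goodF mul one cj F" and gG: "goodF mul one cj G" and q: "snd (cmul mul F G) \<in> CA mul one cj"
  shows "(\<exists>J\<in>SA mul one cj. fst (cmul mul F G) + mul J (snd (cmul mul F G)) = 0) \<longleftrightarrow>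
     (\<exists>J\<in>SA mul one cj. fst F + mul J (snd F) = 0) \<or> (\<exists>J\<in>SA mul one cj. fst G + mul J (snd G) = 0)"
proof -
  interpret A: altstar mul one cj by (rule alg)
  obtain \<alpha> where A: "fst (cN mul cj F) = \<alpha> *\<^sub>R one" using gF unfolding goodF_def reals_in_def by auto
  obtain \<beta> where B: "snd (cN mul cj F) = \<beta> *\<^sub>R one" using gF unfolding goodF_def reals_in_def by auto
  obtain \<gamma> where C: "fst (cN mul cj G) = \<gamma> *\<^sub>R one" using gG unfolding goodF_def reals_in_def by auto
  obtain \<delta> where D: "snd (cN mul cj G) = \<delta> *\<^sub>R one" using gG unfolding goodF_def reals_in_def by auto
  have NF: "cN mul cj F = (\<alpha> *\<^sub>R one, \<beta> *\<^sub>R one)" using A B by (simp add: prod_eq_iff)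
  have NG: "cN mul cj G = (\<gamma> *\<^sub>R one, \<delta> *\<^sub>R one)" using C D by (simp add: prod_eq_iff)
  have NFG: "cN mul cj (cmul mul F G) = ((\<alpha>*\<gamma> - \<beta>*\<delta>) *\<^sub>R one, (\<alpha>*\<delta> + \<beta>*\<gamma>) *\<^sub>R one)"
    using KEY[OF alg bb bl ns gF gG] NF NG A.cmul_reals by simp
  have ZF: "(\<exists>J\<in>SA mul one cj. fst F + mul J (snd F) = 0) \<longleftrightarrow> (\<alpha> = 0 \<and> \<beta> = 0)"
  proof -
    have "snd F \<in> CA mul one cj" using gF by (simp add: goodF_def)
    moreover have "mul (fst F) (cj (snd F)) + mul (snd F) (cj (fst F)) \<in> center mul"
      using B NC_snd[of mul F cj] A.cen_one by simp
    ultimately have "(\<exists>J\<in>SA mul one cj. fst F + mul J (snd F) = 0) \<longleftrightarrow> (fst (cN mul cj F) = 0 \<and> snd (cN mul cj F) = 0)"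
      using A.L1[OF ns SAne] NC_fst[of mul F cj] NC_snd[of mul F cj] by simp
    then show ?thesis using A B one0 by simp
  qed
  have ZG: "(\<exists>J\<in>SA mul one cj. fst G + mul J (snd G) = 0) \<longleftrightarrow> (\<gamma> = 0 \<and> \<delta> = 0)"
  proof -
    have "snd G \<in> CA mul one cj" using gG by (simp add: goodF_def)
    moreover have "mul (fst G) (cj (snd G)) + mul (snd G) (cj (fst G)) \<in> center mul"
      using D NC_snd[of mul G cj] A.cen_one by simp
    ultimately have "(\<exists>J\<in>SA mul one cj. fst G + mul J (snd G) = 0) \<longleftrightarrow> (fst (cN mul cj G) = 0 \<and> snd (cN mul cj G) = 0)"
      using A.L1[OF ns SAne] NC_fst[of mul G cj] NC_snd[of mul G cj] by simp
    then show ?thesis using C D one0 by simp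
  qed
  have ZFG: "(\<exists>J\<in>SA mul one cj. fst (cmul mul F G) + mul J (snd (cmul mul F G)) = 0)
      \<longleftrightarrow> (\<alpha>*\<gamma> - \<beta>*\<delta> = 0 \<and> \<alpha>*\<delta> + \<beta>*\<gamma> = 0)"
  proof -
    have "snd (cN mul cj (cmul mul F G)) = (\<alpha>*\<delta> + \<beta>*\<gamma>) *\<^sub>R one" using NFG by simp
    then have "mul (fst (cmul mul F G)) (cj (snd (cmul mul F G))) + mul (snd (cmul mul F G)) (cj (fst (cmul mul F G))) \<in> center mul"
      using NC_snd[of mul "cmul mul F G" cj] A.cen_one by simp
    then have "(\<exists>J\<in>SA mul one cj. fst (cmul mul F G) + mul J (snd (cmul mul F G)) = 0)
       \<longleftrightarrow> (fst (cN mul cj (cmul mul F G)) = 0 \<and> snd (cN mul cj (cmul mul F G)) = 0)"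
      using A.L1[OF ns SAne q] NC_fst[of mul "cmul mul F G" cj] NC_snd[of mul "cmul mul F G" cj] by simp
    then show ?thesis using NFG one0 by simp
  qed
  show ?thesis using ZF ZG ZFG cplx_zero by blast
qed



lemma stem_mult_eq: "stem_mult mul F G = (\<lambda>z. cmul mul (F z) (G z))"
  by (simp add: stem_mult_def cmul_def fun_eq_iff)
lemma stem_cj_eq: "stem_cj cj F = (\<lambda>z. ccj cj (F z))"
  by (simp add: stem_cj_def ccj_def fun_eq_iff)
lemma stem_N_eq: "stem_N mul cj F = (\<lambda>z. cN mul cj (F z))"
  by (simp add: stem_N_def stem_mult_eq stem_cj_eq)

context altstar begin

lemma SA_props:
  assumes "J \<in> SA mul one cj"
  shows "cj J = - J" "J \<star> J = - one" "J \<star> (J \<star> w) = - w" "- J \<in> SA mul one cj"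
proof -
  show c: "cj J = - J" using assms by (simp add: SA_def tr_def eq_neg_iff_add_eq_0 add.commute)
  show jj: "J \<star> J = - one" using assms c by (simp add: SA_def nrm_def mminus_r minus_equation_iff)
  show "J \<star> (J \<star> w) = - w" using alt_l[of J w] jj by (simp add: assoc_def mminus_l one_l)
  show "- J \<in> SA mul one cj" using assms c by (simp add: SA_def tr_def nrm_def cj_minus mminus_l mminus_r)
qed

lemma SA_nonreal:
  assumes "J \<in> SA mul one cj" "one \<noteq> 0"
  shows "J \<noteq> c *\<^sub>R one"
proof
  assume J: "J = c *\<^sub>R one"
  have "cj J = c *\<^sub>R one" using J by (simp add: cj_scale cj_one)
  then have "c *\<^sub>R one = - (c *\<^sub>R one)" using SA_props(1)[OF assms(1)] J by simp
  then have "c = 0" using assms(2) by (simp add: eq_neg_iff_add_eq_0 flip: scaleR_add_left)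
  then have "J = 0" using J by simp
  then show False using assms by (simp add: SA_def nrm_def)
qed

lemma rep_unique:
  assumes one0: "one \<noteq> 0" and J: "J \<in> SA mul one cj" and K: "K \<in> SA mul one cj"
    and eq: "a *\<^sub>R one + b *\<^sub>R J = c *\<^sub>R one + d *\<^sub>R K"
  shows "a = c" "b *\<^sub>R J = d *\<^sub>R K" "b * b = d * d"
proof -
  have "cj (a *\<^sub>R one + b *\<^sub>R J) = cj (c *\<^sub>R one + d *\<^sub>R K)" using eq by simp
  then have e2: "a *\<^sub>R one - b *\<^sub>R J = c *\<^sub>R one - d *\<^sub>R K"
    using SA_props(1)[OF J] SA_props(1)[OF K] by (simp add: cj_add cj_scale cj_one)
  from eq e2 have "(a *\<^sub>R one + b *\<^sub>R J) + (a *\<^sub>R one - b *\<^sub>R J) = (c *\<^sub>R one + d *\<^sub>R K) + (c *\<^sub>R one - d *\<^sub>R K)"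
    by simp
  then have "a *\<^sub>R one + a *\<^sub>R one = c *\<^sub>R one + c *\<^sub>R one" by (simp add: algebra_simps)
  then have "a *\<^sub>R one = c *\<^sub>R one" by (rule double_eq)
  then show ac: "a = c" using one0 by simp
  then show bd: "b *\<^sub>R J = d *\<^sub>R K" using eq by simp
  have "(b *\<^sub>R J) \<star> cj (b *\<^sub>R J) = (b * b) *\<^sub>R one"
    using J by (simp add: SA_def nrm_def cj_scale mscale_l mscale_r)
  moreover have "(d *\<^sub>R K) \<star> cj (d *\<^sub>R K) = (d * d) *\<^sub>R one"
    using K by (simp add: SA_def nrm_def cj_scale mscale_l mscale_r)
  ultimately show "b * b = d * d" using bd one0 by simp
qed

lemma SA_ne0: "J \<in> SA mul one cj \<Longrightarrow> one \<noteq> 0 \<Longrightarrow> J \<noteq> 0"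
  using SA_nonreal[of J 0] by simp

lemma induced_val:
  assumes one0: "one \<noteq> 0" and st: "stem D H" and Dc: "\<forall>z\<in>D. cnj z \<in> D"
    and z: "z \<in> D" and J: "J \<in> SA mul one cj"
  shows "induced mul one cj D H (Re z *\<^sub>R one + Im z *\<^sub>R J) = fst (H z) + J \<star> snd (H z)"
proof -
  define x where "x = Re z *\<^sub>R one + Im z *\<^sub>R J"
  define P where "P = (\<lambda>(w, K). w \<in> D \<and> K \<in> SA mul one cj \<and> x = Re w *\<^sub>R one + Im w *\<^sub>R K)"
  have ex: "\<exists>p. P p" using z J unfolding P_def x_def by (intro exI[of _ "(z, J)"]) simp
  obtain w K where wK: "(SOME p. P p) = (w, K)" by (cases "SOME p. P p")
  have PwK: "P (w, K)" using someI_ex[OF ex] wK by simp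
  then have w: "w \<in> D" and K: "K \<in> SA mul one cj" and xw: "x = Re w *\<^sub>R one + Im w *\<^sub>R K"
    unfolding P_def by auto
  have ind: "induced mul one cj D H x = fst (H w) + K \<star> snd (H w)"
    unfolding induced_def using wK unfolding P_def by simp
  have u: "Re z = Re w" "Im z *\<^sub>R J = Im w *\<^sub>R K" "Im z * Im z = Im w * Im w"
    using rep_unique[OF one0 J K] xw unfolding x_def by auto
  have stz: "H (cnj z) = (fst (H z), - snd (H z))" using st z by (simp add: stem_def)
  show ?thesis
  proof (cases "Im z = 0")
    case True
    then have "Im w *\<^sub>R K = 0" using u by simp
    then have "Im w = 0" using SA_ne0[OF K one0] by simp
    then have wz: "w = z" using u True by (simp add: complex_eqI)
    have "cnj z = z" using True by (simp add: complex_eqI)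
    then have h: "snd (H z) = - snd (H z)" using stz by (metis snd_conv)
    then have "snd (H z) + snd (H z) = 0 + 0" by (metis add.right_inverse add.right_neutral)
    then have "snd (H z) = 0" by (rule double_eq)
    from ind have "induced mul one cj D H x = fst (H z) + J \<star> snd (H z)" using \<open>snd (H z) = 0\<close> wz by simp
    then show ?thesis unfolding x_def[symmetric] .
  next
    case False
    have "Im w = Im z \<or> Im w = - Im z" using u(3) by (metis minus_mult_minus square_eq_iff)
    then show ?thesis
    proof
      assume e: "Im w = Im z"
      then have KJ: "K = J" using u(2) False by simp
      have wz: "w = z" using e u(1) by (simp add: complex_eqI)
      from ind have "induced mul one cj D H x = fst (H z) + J \<star> snd (H z)" by (simp only: KJ wz)
      then show ?thesis unfolding x_def[symmetric] .
    next
      assume e: "Im w = - Im z"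
      then have "Im z *\<^sub>R J + Im z *\<^sub>R K = 0" using u(2) by simp
      then have "Im z *\<^sub>R (J + K) = 0" by (simp only: scaleR_right_distrib)
      then have "J + K = 0" using False by simp
      then have "K = - J" by (simp add: eq_neg_iff_add_eq_0 add.commute)
      moreover have "w = cnj z" using e u(1) by (simp add: complex_eqI)
      ultimately have "induced mul one cj D H x = fst (H z) + (- J) \<star> (- snd (H z))"
        using ind stz by (simp only: fst_conv snd_conv)
      then have "induced mul one cj D H x = fst (H z) + J \<star> snd (H z)" by (simp only: mminus_l mminus_r minus_minus)
      then show ?thesis unfolding x_def[symmetric] .
    qed
  qed
qed


lemma CA_scale:
  assumes c: "c \<noteq> 0" and cb: "c *\<^sub>R b \<in> CA mul one cj"
  shows "b \<in> CA mul one cj"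
proof (cases "b = 0")
  case True then show ?thesis by (simp add: CA_def)
next
  case False
  then have "c *\<^sub>R b \<noteq> 0" using c by simp
  then have h: "nrm mul cj (c *\<^sub>R b) \<in> center mul" "invertible_el mul one (nrm mul cj (c *\<^sub>R b))"
    "nrm mul cj (cj (c *\<^sub>R b)) \<in> center mul" "invertible_el mul one (nrm mul cj (cj (c *\<^sub>R b)))"
    using cb by (auto simp: CA_def)
  have n1: "nrm mul cj (c *\<^sub>R b) = (c * c) *\<^sub>R nrm mul cj b" by (simp add: nrm_def cj_scale mscale_l mscale_r)
  have n2: "nrm mul cj (cj (c *\<^sub>R b)) = (c * c) *\<^sub>R nrm mul cj (cj b)"
    by (simp add: nrm_def cj_scale mscale_l mscale_r)
  have cc: "c * c \<noteq> 0" using c by simp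
  have inv: "invertible_el mul one w" if hw: "invertible_el mul one ((c * c) *\<^sub>R w)" for w
  proof -
    obtain s where "((c * c) *\<^sub>R w) \<star> s = one" "s \<star> ((c * c) *\<^sub>R w) = one"
      using hw unfolding invertible_el_def by blast
    then have "w \<star> ((c * c) *\<^sub>R s) = one" "((c * c) *\<^sub>R s) \<star> w = one" by (simp_all add: mscale_l mscale_r)
    then show ?thesis unfolding invertible_el_def by blast
  qed
  have cen': "w \<in> center mul" if "(c * c) *\<^sub>R w \<in> center mul" for w
    using cen_scale[OF that, of "1 / (c * c)"] cc by simp
  show ?thesis using h n1 n2 inv cen' by (auto simp: CA_def)
qed

lemma stem_cmul: "stem D F \<Longrightarrow> stem D G \<Longrightarrow> stem D (\<lambda>z. cmul mul (F z) (G z))"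
  by (simp add: stem_def cmul_def mminus_l mminus_r)

lemma stem_ccj: "stem D F \<Longrightarrow> stem D (\<lambda>z. ccj cj (F z))"
  by (simp add: stem_def ccj_def cj_minus)

lemma in_Omega: "z \<in> D \<Longrightarrow> J \<in> SA mul one cj \<Longrightarrow> Re z *\<^sub>R one + Im z *\<^sub>R J \<in> OmegaD mul one cj D"
  unfolding OmegaD_def by blast

lemma tame_unpack:
  assumes one0: "one \<noteq> 0" and st: "stem D H" and Dc: "\<forall>z\<in>D. cnj z \<in> D" and z: "z \<in> D"
    and SAne: "SA mul one cj \<noteq> {}" and tm: "tame_stem mul one cj D H"
  shows "fst (cN mul cj (H z)) \<in> reals_in one" "snd (cN mul cj (H z)) \<in> reals_in one"
    "cmul mul (ccj cj (H z)) (H z) = cN mul cj (H z)"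
proof -
  show "fst (cN mul cj (H z)) \<in> reals_in one" "snd (cN mul cj (H z)) \<in> reals_in one"
    using tm z by (auto simp: tame_stem_def slice_preserving_stem_def stem_N_eq)
  obtain J where J: "J \<in> SA mul one cj" using SAne by blast
  define N where "N = (\<lambda>z. cN mul cj (H z))"
  define M where "M = (\<lambda>z. cN mul cj (ccj cj (H z)))"
  have stN: "stem D N" unfolding N_def by (intro stem_cmul stem_ccj st)
  have stM: "stem D M" unfolding M_def by (intro stem_cmul stem_ccj st)
  have eq: "fst (N z) + K \<star> snd (N z) = fst (M z) + K \<star> snd (M z)" if K: "K \<in> SA mul one cj" for K
  proof -
    have "induced mul one cj D N (Re z *\<^sub>R one + Im z *\<^sub>R K) = induced mul one cj D M (Re z *\<^sub>R one + Im z *\<^sub>R K)"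
      using tm in_Omega[OF z K] unfolding tame_stem_def N_def M_def stem_N_eq stem_cj_eq by blast
    then show ?thesis using induced_val[OF one0 stN Dc z K] induced_val[OF one0 stM Dc z K] by simp
  qed
  define w where "w = snd (N z) - snd (M z)"
  have e1: "J \<star> w = fst (M z) - fst (N z)" using eq[OF J] unfolding w_def
    by (simp add: mdiff_r algebra_simps)
  have e2: "(- J) \<star> w = fst (M z) - fst (N z)" using eq[OF SA_props(4)[OF J]] unfolding w_def
    by (simp add: mdiff_r algebra_simps)
  have e2': "- (J \<star> w) = fst (M z) - fst (N z)" using e2 by (simp only: mminus_l)
  have "J \<star> w + J \<star> w = J \<star> w - (- (J \<star> w))" by simp
  also have "\<dots> = J \<star> w - (fst (M z) - fst (N z))" unfolding e2' ..
  also have "\<dots> = 0 + 0" unfolding e1 by simp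
  finally have "J \<star> w + J \<star> w = 0 + 0" .
  then have "J \<star> w = 0" by (rule double_eq)
  then have "J \<star> (J \<star> w) = 0" by simp
  then have w0: "w = 0" using SA_props(3)[OF J, of w] by simp
  then have "fst (M z) = fst (N z)" using e1 by simp
  moreover have "snd (M z) = snd (N z)" using w0 unfolding w_def by simp
  ultimately have "M z = N z" by (simp add: prod_eq_iff)
  then show "cmul mul (ccj cj (H z)) (H z) = cN mul cj (H z)"
    unfolding M_def N_def by (simp add: ccj_def cj_cj)
qed

lemma x_nonreal:
  assumes one0: "one \<noteq> 0" and J: "J \<in> SA mul one cj" and Im: "Im z \<noteq> 0"
  shows "Re z *\<^sub>R one + Im z *\<^sub>R J \<notin> reals_in one"
proof
  assume "Re z *\<^sub>R one + Im z *\<^sub>R J \<in> reals_in one"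
  then obtain r where "Re z *\<^sub>R one + Im z *\<^sub>R J = r *\<^sub>R one" by (auto simp: reals_in_def)
  then have "Im z *\<^sub>R J = (r - Re z) *\<^sub>R one" by (simp add: algebra_simps)
  then have "(1 / Im z) *\<^sub>R (Im z *\<^sub>R J) = (1 / Im z) *\<^sub>R ((r - Re z) *\<^sub>R one)" by simp
  then have "J = ((r - Re z) / Im z) *\<^sub>R one" using Im by simp
  then show False using SA_nonreal[OF J one0] by blast
qed

lemma sph_val:
  assumes one0: "one \<noteq> 0" and st: "stem D H" and Dc: "\<forall>z\<in>D. cnj z \<in> D" and z: "z \<in> D"
    and J: "J \<in> SA mul one cj" and Im: "Im z \<noteq> 0"
  shows "sph_deriv mul one cj (induced mul one cj D H) (Re z *\<^sub>R one + Im z *\<^sub>R J) = (1 / Im z) *\<^sub>R snd (H z)"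
proof -
  define \<beta> where "\<beta> = Im z"
  define x where "x = Re z *\<^sub>R one + Im z *\<^sub>R J"
  have cjx: "cj x = Re (cnj z) *\<^sub>R one + Im (cnj z) *\<^sub>R J"
    unfolding x_def using SA_props(1)[OF J] by (simp add: cj_add cj_scale cj_one)
  have imp: "imp cj x = \<beta> *\<^sub>R J"
    unfolding imp_def tr_def cjx unfolding x_def \<beta>_def by (simp add: algebra_simps scaleR_add_left[symmetric])
  have ainv: "ainv mul one (\<beta> *\<^sub>R J) = (- (1 / \<beta>)) *\<^sub>R J"
    unfolding ainv_def
  proof (rule the_equality)
    show "(\<beta> *\<^sub>R J) \<star> ((- (1 / \<beta>)) *\<^sub>R J) = one \<and> ((- (1 / \<beta>)) *\<^sub>R J) \<star> (\<beta> *\<^sub>R J) = one"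
      using SA_props(2)[OF J] Im unfolding \<beta>_def by (simp add: mscale_l mscale_r mminus_l mminus_r)
  next
    fix y assume "(\<beta> *\<^sub>R J) \<star> y = one \<and> y \<star> (\<beta> *\<^sub>R J) = one"
    then have "\<beta> *\<^sub>R (J \<star> y) = one" by (simp add: mscale_l)
    then have "J \<star> y = (1 / \<beta>) *\<^sub>R one" using Im unfolding \<beta>_def
      by (metis divideR_right eq_vector_fraction_iff scaleR_one)
    then have "J \<star> (J \<star> y) = (1 / \<beta>) *\<^sub>R J" by (simp add: mscale_r one_r)
    then have my: "- y = (1 / \<beta>) *\<^sub>R J" using SA_props(3)[OF J, of y] by simp
    show "y = (- (1 / \<beta>)) *\<^sub>R J" using arg_cong[where f=uminus, OF my] by simp
  qed
  have cz: "cnj z \<in> D" using Dc z by blast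
  have fx: "induced mul one cj D H x = fst (H z) + J \<star> snd (H z)"
    unfolding x_def by (rule induced_val[OF one0 st Dc z J])
  have fcx: "induced mul one cj D H (cj x) = fst (H z) - J \<star> snd (H z)"
    unfolding cjx using induced_val[OF one0 st Dc cz J] st z by (simp add: stem_def mminus_r)
  have "sph_deriv mul one cj (induced mul one cj D H) x
      = (1/2) *\<^sub>R (((- (1 / \<beta>)) *\<^sub>R J) \<star> (J \<star> snd (H z) + J \<star> snd (H z)))"
    unfolding sph_deriv_def imp ainv fx fcx by (simp add: algebra_simps)
  also have "\<dots> = (1/2) *\<^sub>R (((- (1 / \<beta>)) *\<^sub>R J) \<star> (J \<star> snd (H z)) + ((- (1 / \<beta>)) *\<^sub>R J) \<star> (J \<star> snd (H z)))"
    by (simp only: madd_r)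
  also have "((- (1 / \<beta>)) *\<^sub>R J) \<star> (J \<star> snd (H z)) = (1 / \<beta>) *\<^sub>R snd (H z)"
  proof -
    have "((- (1 / \<beta>)) *\<^sub>R J) \<star> (J \<star> snd (H z)) = (- (1 / \<beta>)) *\<^sub>R (J \<star> (J \<star> snd (H z)))"
      by (rule mscale_l)
    also have "\<dots> = (1 / \<beta>) *\<^sub>R snd (H z)" using SA_props(3)[OF J, of "snd (H z)"] by simp
    finally show ?thesis .
  qed
  also have "(1/2) *\<^sub>R ((1 / \<beta>) *\<^sub>R snd (H z) + (1 / \<beta>) *\<^sub>R snd (H z)) = (1 / \<beta>) *\<^sub>R snd (H z)"
  proof -
    have "(1/2) *\<^sub>R ((1 / \<beta>) *\<^sub>R snd (H z) + (1 / \<beta>) *\<^sub>R snd (H z))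
        = (1/2) *\<^sub>R (2 *\<^sub>R ((1 / \<beta>) *\<^sub>R snd (H z)))" by (simp only: scaleR_2)
    also have "\<dots> = (1 / \<beta>) *\<^sub>R snd (H z)" by (simp only: scaleR_scaleR) simp
    finally show ?thesis .
  qed
  finally show ?thesis unfolding x_def \<beta>_def .
qed

lemma union_char:
  assumes one0: "one \<noteq> 0" and st: "stem D H" and Dc: "\<forall>z\<in>D. cnj z \<in> D"
  shows "(\<Union>x \<in> zeros_on (OmegaD mul one cj D) (induced mul one cj D H). sphere_of mul one cj x)
    = {y. \<exists>z\<in>D. \<exists>I\<in>SA mul one cj. y = Re z *\<^sub>R one + Im z *\<^sub>R I
            \<and> (\<exists>J\<in>SA mul one cj. fst (H z) + J \<star> snd (H z) = 0)}"
proof (rule set_eqI, rule iffI)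
  fix y assume "y \<in> (\<Union>x \<in> zeros_on (OmegaD mul one cj D) (induced mul one cj D H). sphere_of mul one cj x)"
  then obtain x where x: "x \<in> OmegaD mul one cj D" "induced mul one cj D H x = 0" "y \<in> sphere_of mul one cj x"
    by (auto simp: zeros_on_def)
  obtain z J where zJ: "z \<in> D" "J \<in> SA mul one cj" "x = Re z *\<^sub>R one + Im z *\<^sub>R J"
    using x(1) unfolding OmegaD_def by blast
  have Z: "fst (H z) + J \<star> snd (H z) = 0" using x(2) zJ induced_val[OF one0 st Dc zJ(1,2)] by simp
  obtain a b I K where abIK: "I \<in> SA mul one cj" "K \<in> SA mul one cj" "x = a *\<^sub>R one + b *\<^sub>R K"
      "y = a *\<^sub>R one + b *\<^sub>R I"
    using x(3) unfolding sphere_of_def by blast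
  have eqx: "Re z *\<^sub>R one + Im z *\<^sub>R J = a *\<^sub>R one + b *\<^sub>R K" using zJ(3) abIK(3) by simp
  have u: "Re z = a" "Im z * Im z = b * b"
    using rep_unique[OF one0 zJ(2) abIK(2) eqx] by auto
  have "b = Im z \<or> b = - Im z" using u(2) by (metis minus_mult_minus square_eq_iff)
  then have "\<exists>I'\<in>SA mul one cj. y = Re z *\<^sub>R one + Im z *\<^sub>R I'"
  proof
    assume "b = Im z" then show ?thesis using abIK u by blast
  next
    assume "b = - Im z"
    then have "y = Re z *\<^sub>R one + Im z *\<^sub>R (- I)" using abIK u by simp
    then show ?thesis using SA_props(4)[OF abIK(1)] by blast
  qed
  then show "y \<in> {y. \<exists>z\<in>D. \<exists>I\<in>SA mul one cj. y = Re z *\<^sub>R one + Im z *\<^sub>R I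
            \<and> (\<exists>J\<in>SA mul one cj. fst (H z) + J \<star> snd (H z) = 0)}"
    using zJ Z by blast
next
  fix y assume "y \<in> {y. \<exists>z\<in>D. \<exists>I\<in>SA mul one cj. y = Re z *\<^sub>R one + Im z *\<^sub>R I
            \<and> (\<exists>J\<in>SA mul one cj. fst (H z) + J \<star> snd (H z) = 0)}"
  then obtain z I J where zIJ: "z \<in> D" "I \<in> SA mul one cj" "y = Re z *\<^sub>R one + Im z *\<^sub>R I"
    "J \<in> SA mul one cj" "fst (H z) + J \<star> snd (H z) = 0" by blast
  define x where "x = Re z *\<^sub>R one + Im z *\<^sub>R J"
  have "x \<in> zeros_on (OmegaD mul one cj D) (induced mul one cj D H)"
    unfolding zeros_on_def x_def using in_Omega[OF zIJ(1,4)] induced_val[OF one0 st Dc zIJ(1,4)] zIJ(5) by simp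
  moreover have "y \<in> sphere_of mul one cj x"
    unfolding sphere_of_def x_def using zIJ by blast
  ultimately show "y \<in> (\<Union>x \<in> zeros_on (OmegaD mul one cj D) (induced mul one cj D H). sphere_of mul one cj x)"
    by blast
qed

end



context altstar begin

lemma real_case:
  assumes ns: "nonsingular mul cj" and fa: "fst (cN mul cj (a, 0)) \<in> reals_in one"
    and ca: "cmul mul (ccj cj (a, 0)) (a, 0) = cN mul cj (a, 0)"
  shows "a \<star> c = 0 \<longleftrightarrow> a = 0 \<or> c = 0"
proof
  assume ac: "a \<star> c = 0"
  show "a = 0 \<or> c = 0"
  proof (cases "a = 0")
    case False
    obtain \<alpha> where \<alpha>: "a \<star> cj a = \<alpha> *\<^sub>R one" using fa by (auto simp: reals_in_def cmul_def ccj_def)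
    have \<alpha>': "cj a \<star> a = \<alpha> *\<^sub>R one" using ca \<alpha> by (simp add: cmul_def ccj_def prod_eq_iff)
    have "\<alpha> \<noteq> 0"
    proof
      assume "\<alpha> = 0"
      then have "nrm mul cj a = 0" using \<alpha> by (simp add: nrm_def)
      then show False using ns False by (simp add: nonsingular_def)
    qed
    define a' where "a' = (1 / \<alpha>) *\<^sub>R cj a"
    have "a \<star> a' = one" "a' \<star> a = one" unfolding a'_def using \<alpha> \<alpha>' \<open>\<alpha> \<noteq> 0\<close> by (simp_all add: mscale_l mscale_r)
    then have "a' \<star> (a \<star> c) = c" by (rule IP(1))
    then show ?thesis using ac by simp
  qed simp
qed auto

end


theorem proposition5p17:
  fixes mul :: "'a::euclidean_space \<Rightarrow> 'a \<Rightarrow> 'a" and one :: 'a and cj :: "'a \<Rightarrow> 'a"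
    and D :: "complex set" and F G :: "complex \<Rightarrow> 'a \<times> 'a"
  assumes alg: "alt_star_alg mul one cj"
    and nonsing: "nonsingular mul cj"
    and SA_ne: "SA mul one cj \<noteq> {}"
    and D_open: "open D" and D_conn: "connected D" and D_real: "D \<inter> \<real> \<noteq> {}"
    and D_cnj: "\<forall>z\<in>D. cnj z \<in> D"
    and F_reg: "slice_regular_stem D F" and F_tame: "tame_stem mul one cj D F"
    and G_reg: "slice_regular_stem D G" and G_tame: "tame_stem mul one cj D G"
    and sd: "\<forall>x \<in> OmegaD mul one cj D - reals_in one.
        sph_deriv mul one cj (induced mul one cj D F) x \<in> CA mul one cj \<and>
        sph_deriv mul one cj (induced mul one cj D G) x \<in> CA mul one cj \<and>
        sph_deriv mul one cj (induced mul one cj D (stem_mult mul F G)) x \<in> CA mul one cj"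
  shows "(\<Union>x \<in> zeros_on (OmegaD mul one cj D) (induced mul one cj D (stem_mult mul F G)).
            sphere_of mul one cj x)
       = (\<Union>x \<in> zeros_on (OmegaD mul one cj D) (induced mul one cj D F)
               \<union> zeros_on (OmegaD mul one cj D) (induced mul one cj D G).
            sphere_of mul one cj x)"
proof -
  have bil: "bilinear mul" and one0: "one \<noteq> 0" and units: "\<forall>x. mul one x = x \<and> mul x one = x"
    and alts: "\<forall>x y. assoc mul x x y = 0 \<and> assoc mul x y x = 0 \<and> assoc mul y x x = 0"
    and lin: "linear cj" and cjcj: "\<forall>x. cj (cj x) = x" and cjm: "\<forall>x y. cj (mul x y) = mul (cj y) (cj x)"
    and cjr: "\<forall>r. cj (r *\<^sub>R one) = r *\<^sub>R one"
    using alg unfolding alt_star_alg_def by auto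
  have bb: "bounded_bilinear mul" using bil bilinear_conv_bounded_bilinear by blast
  have bl: "bounded_linear cj" using lin linear_conv_bounded_linear by blast
  have AS: "altstar mul one cj"
  proof unfold_locales
    fix x y z :: 'a and c :: real
    show "mul (x + y) z = mul x z + mul y z" by (rule bilinear_ladd[OF bil])
    show "mul x (y + z) = mul x y + mul x z" by (rule bilinear_radd[OF bil])
    show "mul (c *\<^sub>R x) y = c *\<^sub>R mul x y" by (rule bilinear_lmul[OF bil])
    show "mul x (c *\<^sub>R y) = c *\<^sub>R mul x y" by (rule bilinear_rmul[OF bil])
    show "mul one x = x" "mul x one = x" using units by auto
    show "assoc mul x x y = 0" "assoc mul y x x = 0" using alts by auto
    show "cj (x + y) = cj x + cj y" by (rule linear_add[OF lin])
    show "cj (c *\<^sub>R x) = c *\<^sub>R cj x" by (rule linear_scale[OF lin])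
    show "cj (cj x) = x" using cjcj by auto
    show "cj (mul x y) = mul (cj y) (cj x)" using cjm by auto
    show "cj one = one" using cjr[rule_format, of 1] by simp
  qed
  interpret A: altstar mul one cj by (rule AS)
  have stF: "stem D F" using F_reg by (simp add: slice_regular_stem_def)
  have stG: "stem D G" using G_reg by (simp add: slice_regular_stem_def)
  have FG: "stem_mult mul F G = (\<lambda>z. cmul mul (F z) (G z))" by (rule stem_mult_eq)
  have stFG: "stem D (stem_mult mul F G)" unfolding FG by (rule A.stem_cmul[OF stF stG])
  obtain J0 where J0: "J0 \<in> SA mul one cj" using SA_ne by blast
  have ptw: "(\<exists>J\<in>SA mul one cj. fst (stem_mult mul F G z) + mul J (snd (stem_mult mul F G z)) = 0)
      \<longleftrightarrow> (\<exists>J\<in>SA mul one cj. fst (F z) + mul J (snd (F z)) = 0) \<or> (\<exists>J\<in>SA mul one cj. fst (G z) + mul J (snd (G z)) = 0)"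
    if z: "z \<in> D" for z
  proof -
    have tF: "fst (cN mul cj (F z)) \<in> reals_in one" "snd (cN mul cj (F z)) \<in> reals_in one"
      "cmul mul (ccj cj (F z)) (F z) = cN mul cj (F z)"
      using A.tame_unpack[OF one0 stF D_cnj z SA_ne F_tame] by auto
    have tG: "fst (cN mul cj (G z)) \<in> reals_in one" "snd (cN mul cj (G z)) \<in> reals_in one"
      "cmul mul (ccj cj (G z)) (G z) = cN mul cj (G z)"
      using A.tame_unpack[OF one0 stG D_cnj z SA_ne G_tame] by auto
    show ?thesis
    proof (cases "Im z = 0")
      case False
      define x where "x = Re z *\<^sub>R one + Im z *\<^sub>R J0"
      have xin: "x \<in> OmegaD mul one cj D - reals_in one"
        unfolding x_def using A.in_Omega[OF z J0] A.x_nonreal[OF one0 J0 False] by blast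
      have c: "1 / Im z \<noteq> 0" using False by simp
      have cF: "snd (F z) \<in> CA mul one cj"
      proof -
        have s1: "sph_deriv mul one cj (induced mul one cj D (F)) x \<in> CA mul one cj" using sd xin by blast
        have sv: "sph_deriv mul one cj (induced mul one cj D (F)) x = (1 / Im z) *\<^sub>R snd (F z)"
          unfolding x_def by (rule A.sph_val[OF one0 stF D_cnj z J0 False])
        show ?thesis using s1 sv A.CA_scale[OF c] by simp
      qed
      have cG: "snd (G z) \<in> CA mul one cj"
      proof -
        have s1: "sph_deriv mul one cj (induced mul one cj D (G)) x \<in> CA mul one cj" using sd xin by blast
        have sv: "sph_deriv mul one cj (induced mul one cj D (G)) x = (1 / Im z) *\<^sub>R snd (G z)"
          unfolding x_def by (rule A.sph_val[OF one0 stG D_cnj z J0 False])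
        show ?thesis using s1 sv A.CA_scale[OF c] by simp
      qed
      have cFG: "snd (stem_mult mul F G z) \<in> CA mul one cj"
      proof -
        have s1: "sph_deriv mul one cj (induced mul one cj D (stem_mult mul F G)) x \<in> CA mul one cj" using sd xin by blast
        have sv: "sph_deriv mul one cj (induced mul one cj D (stem_mult mul F G)) x = (1 / Im z) *\<^sub>R snd (stem_mult mul F G z)"
          unfolding x_def by (rule A.sph_val[OF one0 stFG D_cnj z J0 False])
        show ?thesis using s1 sv A.CA_scale[OF c] by simp
      qed
      have gF: "goodF mul one cj (F z)" using tF cF by (simp add: goodF_def)
      have gG: "goodF mul one cj (G z)" using tG cG by (simp add: goodF_def)
      show ?thesis using main_pt[OF AS bb bl nonsing SA_ne one0 gF gG] cFG unfolding FG by simp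
    next
      case True
      then have cz: "cnj z = z" by (simp add: complex_eqI)
      have sF: "snd (F z) = 0"
      proof -
        have "F z = (fst (F z), - snd (F z))" using stF z cz by (metis stem_def)
        then have "snd (F z) = - snd (F z)" by (metis snd_conv)
        then have "snd (F z) + snd (F z) = 0 + 0" by (metis add.right_inverse add.right_neutral)
        then show ?thesis by (rule A.double_eq)
      qed
      have sG: "snd (G z) = 0"
      proof -
        have "G z = (fst (G z), - snd (G z))" using stG z cz by (metis stem_def)
        then have "snd (G z) = - snd (G z)" by (metis snd_conv)
        then have "snd (G z) + snd (G z) = 0 + 0" by (metis add.right_inverse add.right_neutral)
        then show ?thesis by (rule A.double_eq)
      qed
      have Fz: "F z = (fst (F z), 0)" using sF by (simp add: prod_eq_iff)
      have "mul (fst (F z)) (fst (G z)) = 0 \<longleftrightarrow> fst (F z) = 0 \<or> fst (G z) = 0"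
        using A.real_case[OF nonsing, of "fst (F z)" "fst (G z)"] tF(1) tF(3) Fz by metis
      then show ?thesis unfolding FG using sF sG SA_ne by (simp add: cmul_def) blast
    qed
  qed
  show ?thesis
    unfolding UN_Un A.union_char[OF one0 stFG D_cnj] A.union_char[OF one0 stF D_cnj] A.union_char[OF one0 stG D_cnj]
    using ptw by blast
qed


end
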